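(* Let $d\ge1$, $\sigma>0$, and let $(P_t)_{t\ge0}$ be the heat semigroup generated by $(Lf)(p,\xi)=\sum_{j=1}^d p_j\,\partial_{\xi_j}f(p,\xi)+\frac{\sigma^2}{2}\Delta_p f(p,\xi)$ on $\mathbb{R}^d\times\mathbb{R}^d$. Let $f$ be a non-negative bounded Borel function on $\mathbb{R}^d\times\mathbb{R}^d$. Then for every $t>0$, all $(p,\xi),(p',\xi')\in\mathbb{R}^d\times\mathbb{R}^d$ and every $\alpha>1$, \[(P_tf)^\alpha(p,\xi)\le C_\alpha\big(t,(p,\xi),(p',\xi')\big)\,(P_tf^\alpha)(p',\xi'),\] where \[C_\alpha\big(t,(p,\xi),(p',\xi')\big)=\exp\left(\frac{\alpha}{\alpha-1}\left(\frac{6}{\sigma^2t^3}\sum_{i=1}^d\Big(\frac t2(p_i'-p_i)+(\xi_i'-\xi_i)\Big)^2+\frac{1}{2\sigma^2t}\sum_{i=1}^d(p_i'-p_i)^2\right)\right).\]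
   Context: $P_tf(p,\xi)=\mathbb{E}\,f\big(p+B_t,\xi+tp+\int_0^tB_sds\big)$, where $B$ is a Brownian motion in $\mathbb{R}^d$ with variance $\sigma^2$ started at $0$. *)

theory Defs
  imports "HOL-Probability.Probability"
begin

definition brownian_motion ::
  "'a measure \<Rightarrow> real \<Rightarrow> (real \<Rightarrow> 'a \<Rightarrow> real ^ 'n) \<Rightarrow> bool" where
  "brownian_motion M \<sigma> B \<longleftrightarrow>
     prob_space M \<and>
     (\<forall>t\<ge>0. B t \<in> borel_measurable M) \<and>
     (\<forall>\<omega>\<in>space M. B 0 \<omega> = 0) \<and>
     (\<forall>\<omega>\<in>space M. continuous_on {0..} (\<lambda>t. B t \<omega>)) \<and>
     (\<forall>(n::nat) (ts::nat \<Rightarrow> real). 0 \<le> ts 0 \<and> (\<forall>j<n. ts j < ts (Suc j)) \<longrightarrow>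
        prob_space.indep_vars M (\<lambda>_. borel)
          (\<lambda>(j, i) \<omega>. (B (ts (Suc j)) \<omega> - B (ts j) \<omega>) $ i) ({..<n} \<times> UNIV) \<and>
        (\<forall>j<n. \<forall>i. distributed M lborel (\<lambda>\<omega>. (B (ts (Suc j)) \<omega> - B (ts j) \<omega>) $ i)
                 (\<lambda>x. ennreal (normal_density 0 (\<sigma> * sqrt (ts (Suc j) - ts j)) x))))"

definition kolmogorov_semigroup ::
  "'a measure \<Rightarrow> (real \<Rightarrow> 'a \<Rightarrow> real ^ 'n) \<Rightarrow> real \<Rightarrow>
     ((real ^ 'n) \<times> (real ^ 'n) \<Rightarrow> real) \<Rightarrow> (real ^ 'n) \<times> (real ^ 'n) \<Rightarrow> real" where
  "kolmogorov_semigroup M B t f = (\<lambda>(p, \<xi>).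
     integral\<^sup>L M (\<lambda>\<omega>. f (p + B t \<omega>, \<xi> + t *\<^sub>R p + integral {0..t} (\<lambda>s. B s \<omega>))))"

end

theory Submission
  imports Defs
begin

lemma normal_density_shift_eq:
  assumes "s > 0"
  shows "normal_density 0 s y * exp ((y * d - d\<^sup>2 / 2) / s\<^sup>2) = normal_density d s y"
proof -
  have "-(y - 0)\<^sup>2 / (2 * s\<^sup>2) + (y * d - d\<^sup>2 / 2) / s\<^sup>2 = -(y - d)\<^sup>2 / (2 * s\<^sup>2)"
    using assms by (simp add: field_simps power2_eq_square)
  then show ?thesis
    unfolding normal_density_def by (simp add: mult.assoc flip: exp_add)
qed

lemma nn_integral_normal_shift:
  assumes "s > 0" and [measurable]: "G \<in> borel_measurable borel"
  shows "(\<integral>\<^sup>+y. ennreal (normal_density 0 s y) * G (y + d) \<partial>lborel)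
       = (\<integral>\<^sup>+y. ennreal (normal_density d s y) * G y \<partial>lborel)"
proof -
  have "(\<integral>\<^sup>+y. ennreal (normal_density d s y) * G y \<partial>lborel)
      = (\<integral>\<^sup>+y. ennreal (normal_density d s (d + y)) * G (d + y) \<partial>lborel)"
    using nn_integral_real_affine[of "\<lambda>y. ennreal (normal_density d s y) * G y" 1 d] by simp
  also have "\<dots> = (\<integral>\<^sup>+y. ennreal (normal_density 0 s y) * G (y + d) \<partial>lborel)"
    by (simp add: normal_density_def add.commute)
  finally show ?thesis ..
qed

lemma nn_integral_normal_weight:
  assumes "s > 0" and [measurable]: "G \<in> borel_measurable borel"
  shows "(\<integral>\<^sup>+y. ennreal (normal_density 0 s y) * (ennreal (exp ((y * d - d\<^sup>2 / 2) / s\<^sup>2)) * G y) \<partial>lborel)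
       = (\<integral>\<^sup>+y. ennreal (normal_density d s y) * G y \<partial>lborel)"
  using normal_density_shift_eq[OF assms(1)]
  by (intro nn_integral_cong) (simp add: mult.assoc[symmetric] ennreal_mult'[symmetric])

lemma nn_integral_normal_exp_moment:
  assumes "s > 0"
  shows "(\<integral>\<^sup>+y. ennreal (normal_density 0 s y) * ennreal (exp (q * ((y * d - d\<^sup>2 / 2) / s\<^sup>2))) \<partial>lborel)
       = ennreal (exp (q * (q - 1) * d\<^sup>2 / (2 * s\<^sup>2)))"
proof -
  have eq: "normal_density 0 s y * exp (q * ((y * d - d\<^sup>2 / 2) / s\<^sup>2))
      = exp (q * (q - 1) * d\<^sup>2 / (2 * s\<^sup>2)) * normal_density (q * d) s y" for y
  proof -
    have "-(y - 0)\<^sup>2 / (2 * s\<^sup>2) + q * ((y * d - d\<^sup>2 / 2) / s\<^sup>2)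
        = q * (q - 1) * d\<^sup>2 / (2 * s\<^sup>2) + -(y - q * d)\<^sup>2 / (2 * s\<^sup>2)"
      using assms by (simp add: field_simps power2_eq_square)
    then show ?thesis
      unfolding normal_density_def by (simp add: mult_ac flip: exp_add)
  qed
  have "(\<integral>\<^sup>+y. ennreal (normal_density 0 s y) * ennreal (exp (q * ((y * d - d\<^sup>2 / 2) / s\<^sup>2))) \<partial>lborel)
     = (\<integral>\<^sup>+y. ennreal (exp (q * (q - 1) * d\<^sup>2 / (2 * s\<^sup>2))) * ennreal (normal_density (q * d) s y) \<partial>lborel)"
    by (intro nn_integral_cong) (simp add: eq[simplified] ennreal_mult'[symmetric])
  also have "\<dots> = ennreal (exp (q * (q - 1) * d\<^sup>2 / (2 * s\<^sup>2))) * (\<integral>\<^sup>+y. ennreal (normal_density (q * d) s y) \<partial>lborel)"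
    by (rule nn_integral_cmult) simp
  also have "(\<integral>\<^sup>+y. ennreal (normal_density (q * d) s y) \<partial>lborel) = 1"
    using prob_space.emeasure_space_1[OF prob_space_normal_density[OF assms, of "q*d"]]
    by (simp add: emeasure_density)
  finally show ?thesis by simp
qed


definition Nd :: "real \<Rightarrow> real measure" where
  "Nd s = density lborel (\<lambda>x. ennreal (normal_density 0 s x))"

definition rho1 :: "real \<Rightarrow> real \<Rightarrow> real \<Rightarrow> real" where
  "rho1 s d y = exp ((y * d - d\<^sup>2 / 2) / s\<^sup>2)"

lemma sets_Nd[measurable_cong, simp]: "sets (Nd s) = sets borel"
  by (simp add: Nd_def)

lemma space_Nd[simp]: "space (Nd s) = UNIV"
  by (simp add: Nd_def)

lemma prob_space_Nd: "s > 0 \<Longrightarrow> prob_space (Nd s)"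
  unfolding Nd_def by (rule prob_space_normal_density)

lemma prod_indicator_PiE:
  assumes "finite I" "z \<in> extensional I"
  shows "(\<Prod>i\<in>I. indicator (A i) (z i) :: 'b::comm_semiring_1) = indicator (Pi\<^sub>E I A) z"
proof (cases "z \<in> Pi\<^sub>E I A")
  case True
  then show ?thesis by (auto simp: indicator_def PiE_def Pi_def intro!: prod.neutral)
next
  case False
  with assms obtain i where "i \<in> I" "z i \<notin> A i" by (auto simp: PiE_def Pi_def)
  then show ?thesis using assms False by (auto intro!: prod_zero bexI[of _ i])
qed

lemma PiM_shift_distr:
  assumes I: "finite I" and s: "s > 0"
  shows "distr (PiM I (\<lambda>_. Nd s)) (PiM I (\<lambda>_. lborel)) (\<lambda>z. \<lambda>i\<in>I. z i + \<delta> i)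
       = PiM I (\<lambda>i. density lborel (\<lambda>x. ennreal (normal_density (\<delta> i) s x)))"
    (is "?D = PiM I ?S")
proof -
  interpret S: product_prob_space ?S
    by (rule product_prob_spaceI) (rule prob_space_normal_density[OF s])
  interpret N: product_prob_space "\<lambda>_. Nd s"
    by (rule product_prob_spaceI) (rule prob_space_Nd[OF s])
  have meas: "(\<lambda>z. \<lambda>i\<in>I. z i + \<delta> i) \<in> measurable (PiM I (\<lambda>_. Nd s)) (PiM I (\<lambda>_. lborel))"
    by (rule measurable_restrict) (simp add: measurable_cong_sets[OF sets_PiM_cong[OF refl sets_Nd] refl])
  show ?thesis
  proof (rule S.PiM_eqI[OF I])
    show "sets ?D = sets (PiM I ?S)"
      unfolding sets_distr sets_density by (rule sets_PiM_cong) auto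
    fix A assume A: "\<And>i. i \<in> I \<Longrightarrow> A i \<in> sets (?S i)"
    then have A': "\<And>i. i \<in> I \<Longrightarrow> A i \<in> sets borel" by simp
    have pre: "(\<lambda>z. \<lambda>i\<in>I. z i + \<delta> i) -` Pi\<^sub>E I A \<inter> space (PiM I (\<lambda>_. Nd s))
        = Pi\<^sub>E I (\<lambda>i. {y. y + \<delta> i \<in> A i})"
      by (auto simp: space_PiM PiE_def Pi_def extensional_def)
    have "emeasure ?D (Pi\<^sub>E I A) = emeasure (PiM I (\<lambda>_. Nd s)) (Pi\<^sub>E I (\<lambda>i. {y. y + \<delta> i \<in> A i}))"
    proof -
      have "Pi\<^sub>E I A \<in> sets (PiM I (\<lambda>_. lborel))"
        using A' I by (intro sets_PiM_I_finite) auto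
      then show ?thesis by (simp add: emeasure_distr[OF meas] pre)
    qed
    also have "\<dots> = (\<Prod>i\<in>I. emeasure (Nd s) {y. y + \<delta> i \<in> A i})"
    proof (rule N.emeasure_PiM[OF I])
      fix i assume "i \<in> I"
      then have [measurable]: "A i \<in> sets borel" using A' by simp
      show "{y. y + \<delta> i \<in> A i} \<in> sets (Nd s)" by simp
    qed
    also have "\<dots> = (\<Prod>i\<in>I. emeasure (?S i) (A i))"
    proof (rule prod.cong[OF refl])
      fix i assume "i \<in> I"
      then have [measurable]: "A i \<in> sets borel" using A' by simp
      have "emeasure (Nd s) {y. y + \<delta> i \<in> A i}
          = (\<integral>\<^sup>+y. ennreal (normal_density 0 s y) * indicator (A i) (y + \<delta> i) \<partial>lborel)"
        unfolding Nd_def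
        by (subst emeasure_density) (auto intro!: nn_integral_cong simp: indicator_def)
      also have "\<dots> = (\<integral>\<^sup>+y. ennreal (normal_density (\<delta> i) s y) * indicator (A i) y \<partial>lborel)"
        by (rule nn_integral_normal_shift[OF s]) simp
      also have "\<dots> = emeasure (?S i) (A i)"
        by (subst emeasure_density) auto
      finally show "emeasure (Nd s) {y. y + \<delta> i \<in> A i} = emeasure (?S i) (A i)" .
    qed
    finally show "emeasure ?D (Pi\<^sub>E I A) = (\<Prod>i\<in>I. emeasure (?S i) (A i))" .
  qed
qed

lemma PiM_weight_density:
  assumes I: "finite I" and s: "s > 0"
  shows "density (PiM I (\<lambda>_. Nd s)) (\<lambda>z. \<Prod>i\<in>I. ennreal (rho1 s (\<delta> i) (z i)))
       = PiM I (\<lambda>i. density lborel (\<lambda>x. ennreal (normal_density (\<delta> i) s x)))"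
    (is "?D = PiM I ?S")
proof -
  interpret S: product_prob_space ?S
    by (rule product_prob_spaceI) (rule prob_space_normal_density[OF s])
  interpret N: product_prob_space "\<lambda>_. Nd s"
    by (rule product_prob_spaceI) (rule prob_space_Nd[OF s])
  show ?thesis
  proof (rule S.PiM_eqI[OF I])
    show "sets ?D = sets (PiM I ?S)"
      unfolding sets_distr sets_density by (rule sets_PiM_cong) auto
    fix A assume A: "\<And>i. i \<in> I \<Longrightarrow> A i \<in> sets (?S i)"
    then have A': "\<And>i. i \<in> I \<Longrightarrow> A i \<in> sets borel" by simp
    have meas: "(\<lambda>z. \<Prod>i\<in>I. ennreal (rho1 s (\<delta> i) (z i))) \<in> borel_measurable (PiM I (\<lambda>_. Nd s))"
      unfolding rho1_def by measurable
    have "emeasure ?D (Pi\<^sub>E I A)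
        = (\<integral>\<^sup>+z. (\<Prod>i\<in>I. ennreal (rho1 s (\<delta> i) (z i))) * indicator (Pi\<^sub>E I A) z \<partial>PiM I (\<lambda>_. Nd s))"
      using A' I by (subst emeasure_density[OF meas]) (auto intro!: sets_PiM_I_finite)
    also have "\<dots> = (\<integral>\<^sup>+z. (\<Prod>i\<in>I. ennreal (rho1 s (\<delta> i) (z i)) * indicator (A i) (z i)) \<partial>PiM I (\<lambda>_. Nd s))"
      by (intro nn_integral_cong)
         (simp add: prod.distrib space_PiM prod_indicator_PiE[OF I] PiE_def)
    also have "\<dots> = (\<Prod>i\<in>I. \<integral>\<^sup>+y. ennreal (rho1 s (\<delta> i) y) * indicator (A i) y \<partial>Nd s)"
    proof (rule N.product_nn_integral_prod[OF I])
      fix i assume "i \<in> I"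
      then have [measurable]: "A i \<in> sets borel" using A' by simp
      show "(\<lambda>y. ennreal (rho1 s (\<delta> i) y) * indicator (A i) y) \<in> borel_measurable (Nd s)"
        unfolding rho1_def by simp
    qed
    also have "\<dots> = (\<Prod>i\<in>I. emeasure (?S i) (A i))"
    proof (rule prod.cong[OF refl])
      fix i assume "i \<in> I"
      then have [measurable]: "A i \<in> sets borel" using A' by simp
      have "(\<integral>\<^sup>+y. ennreal (rho1 s (\<delta> i) y) * indicator (A i) y \<partial>Nd s)
          = (\<integral>\<^sup>+y. ennreal (normal_density 0 s y) * (ennreal (rho1 s (\<delta> i) y) * indicator (A i) y) \<partial>lborel)"
        unfolding Nd_def by (subst nn_integral_density) (auto simp: rho1_def)
      also have "\<dots> = (\<integral>\<^sup>+y. ennreal (normal_density (\<delta> i) s y) * indicator (A i) y \<partial>lborel)"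
        unfolding rho1_def by (rule nn_integral_normal_weight[OF s]) simp
      also have "\<dots> = emeasure (?S i) (A i)"
        by (subst emeasure_density) auto
      finally show "(\<integral>\<^sup>+y. ennreal (rho1 s (\<delta> i) y) * indicator (A i) y \<partial>Nd s) = emeasure (?S i) (A i)" .
    qed
    finally show "emeasure ?D (Pi\<^sub>E I A) = (\<Prod>i\<in>I. emeasure (?S i) (A i))" .
  qed
qed

lemma PiM_shift_nn_integral:
  assumes I: "finite I" and s: "s > 0"
    and G: "G \<in> borel_measurable (PiM I (\<lambda>_. lborel))"
  shows "(\<integral>\<^sup>+z. G (\<lambda>i\<in>I. z i + \<delta> i) \<partial>PiM I (\<lambda>_. Nd s))
       = (\<integral>\<^sup>+z. (\<Prod>i\<in>I. ennreal (rho1 s (\<delta> i) (z i))) * G z \<partial>PiM I (\<lambda>_. Nd s))"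
proof -
  have meas: "(\<lambda>z. \<lambda>i\<in>I. z i + \<delta> i) \<in> measurable (PiM I (\<lambda>_. Nd s)) (PiM I (\<lambda>_. lborel))"
    by (rule measurable_restrict) (simp add: measurable_cong_sets[OF sets_PiM_cong[OF refl sets_Nd] refl])
  have measw: "(\<lambda>z. \<Prod>i\<in>I. ennreal (rho1 s (\<delta> i) (z i))) \<in> borel_measurable (PiM I (\<lambda>_. Nd s))"
    unfolding rho1_def by measurable
  have sN: "sets (PiM I (\<lambda>_. Nd s)) = sets (PiM I (\<lambda>_. lborel))"
    by (rule sets_PiM_cong) auto
  have "(\<integral>\<^sup>+z. G (\<lambda>i\<in>I. z i + \<delta> i) \<partial>PiM I (\<lambda>_. Nd s))
     = (\<integral>\<^sup>+z. G z \<partial>distr (PiM I (\<lambda>_. Nd s)) (PiM I (\<lambda>_. lborel)) (\<lambda>z. \<lambda>i\<in>I. z i + \<delta> i))"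
  proof -
    have G2: "G \<in> borel_measurable (PiM I (\<lambda>_. borel))"
      using G measurable_cong_sets[OF sets_PiM_cong[OF refl sets_lborel] refl] by blast
    show ?thesis using G2 by (subst nn_integral_distr[OF meas]) auto
  qed
  also have "\<dots> = (\<integral>\<^sup>+z. G z \<partial>density (PiM I (\<lambda>_. Nd s)) (\<lambda>z. \<Prod>i\<in>I. ennreal (rho1 s (\<delta> i) (z i))))"
    by (simp add: PiM_shift_distr[OF I s] PiM_weight_density[OF I s])
  also have "\<dots> = (\<integral>\<^sup>+z. (\<Prod>i\<in>I. ennreal (rho1 s (\<delta> i) (z i))) * G z \<partial>PiM I (\<lambda>_. Nd s))"
    by (rule nn_integral_density[OF measw])
       (use G measurable_cong_sets[OF sN refl] in blast)
  finally show ?thesis .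
qed

lemma PiM_weight_moment:
  assumes I: "finite I" and s: "s > 0"
  shows "(\<integral>\<^sup>+z. (\<Prod>i\<in>I. ennreal (rho1 s (\<delta> i) (z i) powr q)) \<partial>PiM I (\<lambda>_. Nd s))
       = ennreal (exp (q * (q - 1) * (\<Sum>i\<in>I. (\<delta> i)\<^sup>2) / (2 * s\<^sup>2)))"
proof -
  interpret N: product_prob_space "\<lambda>_. Nd s"
    by (rule product_prob_spaceI) (rule prob_space_Nd[OF s])
  have "(\<integral>\<^sup>+z. (\<Prod>i\<in>I. ennreal (rho1 s (\<delta> i) (z i) powr q)) \<partial>PiM I (\<lambda>_. Nd s))
      = (\<Prod>i\<in>I. \<integral>\<^sup>+y. ennreal (rho1 s (\<delta> i) y powr q) \<partial>Nd s)"
    by (rule N.product_nn_integral_prod[OF I]) (simp add: rho1_def)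
  also have "\<dots> = (\<Prod>i\<in>I. ennreal (exp (q * (q - 1) * (\<delta> i)\<^sup>2 / (2 * s\<^sup>2))))"
  proof (rule prod.cong[OF refl])
    fix i
    have "(\<integral>\<^sup>+y. ennreal (rho1 s (\<delta> i) y powr q) \<partial>Nd s)
        = (\<integral>\<^sup>+y. ennreal (normal_density 0 s y) * ennreal (exp (q * ((y * \<delta> i - (\<delta> i)\<^sup>2 / 2) / s\<^sup>2))) \<partial>lborel)"
      unfolding Nd_def
      by (subst nn_integral_density) (auto simp: rho1_def powr_def)
    also have "\<dots> = ennreal (exp (q * (q - 1) * (\<delta> i)\<^sup>2 / (2 * s\<^sup>2)))"
      by (rule nn_integral_normal_exp_moment[OF s])
    finally show "(\<integral>\<^sup>+y. ennreal (rho1 s (\<delta> i) y powr q) \<partial>Nd s) = ennreal (exp (q * (q - 1) * (\<delta> i)\<^sup>2 / (2 * s\<^sup>2)))" .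
  qed
  also have "\<dots> = ennreal (\<Prod>i\<in>I. exp (q * (q - 1) * (\<delta> i)\<^sup>2 / (2 * s\<^sup>2)))"
    by (simp add: prod_ennreal)
  also have "(\<Prod>i\<in>I. exp (q * (q - 1) * (\<delta> i)\<^sup>2 / (2 * s\<^sup>2))) = exp (q * (q - 1) * (\<Sum>i\<in>I. (\<delta> i)\<^sup>2) / (2 * s\<^sup>2))"
    by (simp add: exp_sum[symmetric] sum_divide_distrib sum_distrib_left I)
  finally show ?thesis .
qed


definition incr :: "(real \<Rightarrow> 'a \<Rightarrow> real ^ 'n) \<Rightarrow> real \<Rightarrow> nat \<times> 'n \<Rightarrow> 'a \<Rightarrow> real" where
  "incr B h x \<omega> = (B (real (Suc (fst x)) * h) \<omega> - B (real (fst x) * h) \<omega>) $ snd x"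

lemma BM_prob_space: "brownian_motion M \<sigma> B \<Longrightarrow> prob_space M"
  by (simp add: brownian_motion_def)

lemma BM_meas: "brownian_motion M \<sigma> B \<Longrightarrow> s \<ge> 0 \<Longrightarrow> B s \<in> borel_measurable M"
  by (simp add: brownian_motion_def)

lemma BM_zero: "brownian_motion M \<sigma> B \<Longrightarrow> \<omega> \<in> space M \<Longrightarrow> B 0 \<omega> = 0"
  by (simp add: brownian_motion_def)

lemma BM_cont: "brownian_motion M \<sigma> B \<Longrightarrow> \<omega> \<in> space M \<Longrightarrow> continuous_on {0..} (\<lambda>t. B t \<omega>)"
  by (simp add: brownian_motion_def)

lemma BM_grid:
  fixes B :: "real \<Rightarrow> 'a \<Rightarrow> real ^ 'n::finite"
  assumes BM: "brownian_motion M \<sigma> B" and h: "h > 0"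
  shows "prob_space.indep_vars M (\<lambda>_. borel) (incr B h) ({..<n} \<times> UNIV)"
    and "\<And>j i. j < n \<Longrightarrow> distributed M lborel (incr B h (j, i))
            (\<lambda>x. ennreal (normal_density 0 (\<sigma> * sqrt h) x))"
proof -
  define ts where "ts = (\<lambda>k::nat. real k * h)"
  have ts: "0 \<le> ts 0 \<and> (\<forall>j<n. ts j < ts (Suc j))" using h by (simp add: ts_def)
  have d: "ts (Suc j) - ts j = h" for j by (simp add: ts_def algebra_simps)
  have eq: "(\<lambda>(j, i) \<omega>. (B (ts (Suc j)) \<omega> - B (ts j) \<omega>) $ i) = incr B h"
    by (auto simp: incr_def ts_def fun_eq_iff)
  from BM have "prob_space.indep_vars M (\<lambda>_. borel)
          (\<lambda>(j, i) \<omega>. (B (ts (Suc j)) \<omega> - B (ts j) \<omega>) $ i) ({..<n} \<times> UNIV) \<and>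
        (\<forall>j<n. \<forall>i. distributed M lborel (\<lambda>\<omega>. (B (ts (Suc j)) \<omega> - B (ts j) \<omega>) $ i)
                 (\<lambda>x. ennreal (normal_density 0 (\<sigma> * sqrt (ts (Suc j) - ts j)) x)))"
    unfolding brownian_motion_def using ts by blast
  then show "prob_space.indep_vars M (\<lambda>_. borel) (incr B h) ({..<n} \<times> UNIV)"
    and "\<And>j i. j < n \<Longrightarrow> distributed M lborel (incr B h (j, i))
            (\<lambda>x. ennreal (normal_density 0 (\<sigma> * sqrt h) x))"
    unfolding eq d by (auto simp: incr_def[abs_def] ts_def)
qed

lemma vec_nth_borel_measurable[measurable]:
  "(\<lambda>v::real^'n::finite. v $ i) \<in> borel_measurable borel"
  by (intro borel_measurable_continuous_onI continuous_intros)

lemma vec_nth_measurable_comp[measurable (raw)]: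
  "f \<in> borel_measurable M \<Longrightarrow> (\<lambda>x. (f x :: real^'n::finite) $ i) \<in> borel_measurable M"
  by (rule measurable_compose[OF _ vec_nth_borel_measurable])

lemma incr_measurable:
  fixes B :: "real \<Rightarrow> 'a \<Rightarrow> real ^ 'n::finite"
  assumes BM: "brownian_motion M \<sigma> B" and h: "h > 0"
  shows "incr B h x \<in> borel_measurable M"
proof -
  have [measurable]: "B (real (Suc (fst x)) * h) \<in> borel_measurable M" "B (real (fst x) * h) \<in> borel_measurable M"
    using h by (auto intro!: BM_meas[OF BM])
  show ?thesis unfolding incr_def by measurable
qed

lemma BM_grid_PiM:
  fixes B :: "real \<Rightarrow> 'a \<Rightarrow> real ^ 'n::finite"
  assumes BM: "brownian_motion M \<sigma> B" and h: "h > 0" and n: "n > 0"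
    and G: "G \<in> borel_measurable (PiM ({..<n} \<times> UNIV) (\<lambda>_. lborel))"
  shows "(\<integral>\<^sup>+\<omega>. G (\<lambda>x\<in>{..<n} \<times> UNIV. incr B h x \<omega>) \<partial>M)
       = (\<integral>\<^sup>+z. G z \<partial>PiM ({..<n} \<times> UNIV) (\<lambda>_. Nd (\<sigma> * sqrt h)))"
proof -
  interpret prob_space M by (rule BM_prob_space[OF BM])
  let ?I = "{..<n} \<times> (UNIV :: 'n set)"
  have Ine: "?I \<noteq> {}" using n by auto
  have rv: "\<And>x. random_variable borel (incr B h x)"
    by (rule incr_measurable[OF BM h])
  have "distr M (PiM ?I (\<lambda>_. borel)) (\<lambda>\<omega>. \<lambda>x\<in>?I. incr B h x \<omega>) = PiM ?I (\<lambda>x. distr M borel (incr B h x))"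
    using indep_vars_iff_distr_eq_PiM[where X="incr B h" and M'="\<lambda>_. borel", OF Ine rv] BM_grid(1)[OF BM h] by blast
  also have "\<dots> = PiM ?I (\<lambda>_. Nd (\<sigma> * sqrt h))"
  proof (rule PiM_cong[OF refl])
    fix x assume "x \<in> ?I"
    then have "distributed M lborel (incr B h x) (\<lambda>x. ennreal (normal_density 0 (\<sigma> * sqrt h) x))"
      using BM_grid(2)[OF BM h, where j="fst x" and i="snd x" and n=n] by auto
    then have "distr M lborel (incr B h x) = Nd (\<sigma> * sqrt h)"
      by (simp add: distributed_def Nd_def)
    moreover have "distr M borel (incr B h x) = distr M lborel (incr B h x)"
      by (rule distr_cong) auto
    ultimately show "distr M borel (incr B h x) = Nd (\<sigma> * sqrt h)" by simp
  qed
  finally have D: "distr M (PiM ?I (\<lambda>_. borel)) (\<lambda>\<omega>. \<lambda>x\<in>?I. incr B h x \<omega>) = PiM ?I (\<lambda>_. Nd (\<sigma> * sqrt h))" .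
  have meas: "(\<lambda>\<omega>. \<lambda>x\<in>?I. incr B h x \<omega>) \<in> measurable M (PiM ?I (\<lambda>_. borel))"
    by (rule measurable_restrict) (rule rv)
  have G2: "G \<in> borel_measurable (PiM ?I (\<lambda>_. borel))"
    using G measurable_cong_sets[OF sets_PiM_cong[OF refl sets_lborel] refl] by blast
  have "(\<integral>\<^sup>+\<omega>. G (\<lambda>x\<in>?I. incr B h x \<omega>) \<partial>M) = (\<integral>\<^sup>+z. G z \<partial>distr M (PiM ?I (\<lambda>_. borel)) (\<lambda>\<omega>. \<lambda>x\<in>?I. incr B h x \<omega>))"
    using G2 by (subst nn_integral_distr[OF meas]) auto
  then show ?thesis unfolding D .
qed

lemma BM_shift:
  fixes B :: "real \<Rightarrow> 'a \<Rightarrow> real ^ 'n::finite"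
  assumes BM: "brownian_motion M \<sigma> B" and h: "h > 0" and n: "n > 0" and \<sigma>: "\<sigma> > 0"
    and G: "G \<in> borel_measurable (PiM ({..<n} \<times> UNIV) (\<lambda>_. lborel))"
  shows "(\<integral>\<^sup>+\<omega>. G (\<lambda>x\<in>{..<n} \<times> UNIV. incr B h x \<omega> + \<delta> x) \<partial>M)
       = (\<integral>\<^sup>+\<omega>. (\<Prod>x\<in>{..<n} \<times> UNIV. ennreal (rho1 (\<sigma> * sqrt h) (\<delta> x) (incr B h x \<omega>)))
             * G (\<lambda>x\<in>{..<n} \<times> UNIV. incr B h x \<omega>) \<partial>M)"
proof -
  let ?I = "{..<n} \<times> (UNIV :: 'n set)"
  let ?s = "\<sigma> * sqrt h"
  have s: "?s > 0" using h \<sigma> by simp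
  have G1: "(\<lambda>z. G (\<lambda>x\<in>?I. z x + \<delta> x)) \<in> borel_measurable (PiM ?I (\<lambda>_. lborel))"
    by (rule measurable_compose[OF _ G], rule measurable_restrict) simp
  have G2: "(\<lambda>z. (\<Prod>x\<in>?I. ennreal (rho1 ?s (\<delta> x) (z x))) * G z) \<in> borel_measurable (PiM ?I (\<lambda>_. lborel))"
    using G unfolding rho1_def by measurable
  have "(\<integral>\<^sup>+\<omega>. G (\<lambda>x\<in>?I. incr B h x \<omega> + \<delta> x) \<partial>M)
      = (\<integral>\<^sup>+\<omega>. (\<lambda>z. G (\<lambda>x\<in>?I. z x + \<delta> x)) (\<lambda>x\<in>?I. incr B h x \<omega>) \<partial>M)"
    by (intro nn_integral_cong arg_cong[where f=G]) auto
  also have "\<dots> = (\<integral>\<^sup>+z. G (\<lambda>x\<in>?I. z x + \<delta> x) \<partial>PiM ?I (\<lambda>_. Nd ?s))"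
    by (rule BM_grid_PiM[OF BM h n G1])
  also have "\<dots> = (\<integral>\<^sup>+z. (\<Prod>x\<in>?I. ennreal (rho1 ?s (\<delta> x) (z x))) * G z \<partial>PiM ?I (\<lambda>_. Nd ?s))"
    by (rule PiM_shift_nn_integral[OF _ s G]) simp
  also have "\<dots> = (\<integral>\<^sup>+\<omega>. (\<lambda>z. (\<Prod>x\<in>?I. ennreal (rho1 ?s (\<delta> x) (z x))) * G z) (\<lambda>x\<in>?I. incr B h x \<omega>) \<partial>M)"
    by (rule BM_grid_PiM[OF BM h n G2, symmetric])
  also have "\<dots> = (\<integral>\<^sup>+\<omega>. (\<Prod>x\<in>?I. ennreal (rho1 ?s (\<delta> x) (incr B h x \<omega>))) * G (\<lambda>x\<in>?I. incr B h x \<omega>) \<partial>M)"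
    by (intro nn_integral_cong arg_cong2[where f="(*)"] prod.cong) auto
  finally show ?thesis .
qed

lemma BM_moment:
  fixes B :: "real \<Rightarrow> 'a \<Rightarrow> real ^ 'n::finite"
  assumes BM: "brownian_motion M \<sigma> B" and h: "h > 0" and n: "n > 0" and \<sigma>: "\<sigma> > 0"
  shows "(\<integral>\<^sup>+\<omega>. (\<Prod>x\<in>{..<n} \<times> UNIV. ennreal (rho1 (\<sigma> * sqrt h) (\<delta> x) (incr B h x \<omega>) powr q)) \<partial>M)
       = ennreal (exp (q * (q - 1) * (\<Sum>x\<in>{..<n} \<times> (UNIV::'n set). (\<delta> x)\<^sup>2) / (2 * (\<sigma> * sqrt h)\<^sup>2)))"
proof -
  let ?I = "{..<n} \<times> (UNIV :: 'n set)"
  let ?s = "\<sigma> * sqrt h"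
  have s: "?s > 0" using h \<sigma> by simp
  have G2: "(\<lambda>z. (\<Prod>x\<in>?I. ennreal (rho1 ?s (\<delta> x) (z x) powr q))) \<in> borel_measurable (PiM ?I (\<lambda>_. lborel))"
    unfolding rho1_def by measurable
  have "(\<integral>\<^sup>+\<omega>. (\<Prod>x\<in>?I. ennreal (rho1 ?s (\<delta> x) (incr B h x \<omega>) powr q)) \<partial>M)
      = (\<integral>\<^sup>+\<omega>. (\<lambda>z. (\<Prod>x\<in>?I. ennreal (rho1 ?s (\<delta> x) (z x) powr q))) (\<lambda>x\<in>?I. incr B h x \<omega>) \<partial>M)"
    by (intro nn_integral_cong prod.cong) auto
  also have "\<dots> = (\<integral>\<^sup>+z. (\<Prod>x\<in>?I. ennreal (rho1 ?s (\<delta> x) (z x) powr q)) \<partial>PiM ?I (\<lambda>_. Nd ?s))"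
    by (rule BM_grid_PiM[OF BM h n G2])
  also have "\<dots> = ennreal (exp (q * (q - 1) * (\<Sum>x\<in>?I. (\<delta> x)\<^sup>2) / (2 * ?s\<^sup>2)))"
    by (rule PiM_weight_moment[OF _ s]) simp
  finally show ?thesis .
qed


lemma integral_piece_bound:
  fixes \<phi> :: "real \<Rightarrow> 'b::banach"
  assumes ab: "a \<le> b" and c: "continuous_on {a..b} \<phi>"
    and e: "\<And>x. x \<in> {a..b} \<Longrightarrow> norm (\<phi> x - \<phi> a) \<le> e"
  shows "norm (integral {a..b} \<phi> - (b - a) *\<^sub>R \<phi> a) \<le> e * (b - a)"
proof -
  have i1: "\<phi> integrable_on {a..b}" by (rule integrable_continuous_real[OF c])
  have "integral {a..b} (\<lambda>x. \<phi> x - \<phi> a) = integral {a..b} \<phi> - integral {a..b} (\<lambda>x. \<phi> a)"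
    by (rule integral_diff[OF i1]) (intro integrable_continuous_real continuous_intros)
  also have "integral {a..b} (\<lambda>x. \<phi> a) = (b - a) *\<^sub>R \<phi> a" using ab by simp
  finally have eq: "integral {a..b} (\<lambda>x. \<phi> x - \<phi> a) = integral {a..b} \<phi> - (b - a) *\<^sub>R \<phi> a" .
  have "norm (integral {a..b} (\<lambda>x. \<phi> x - \<phi> a)) \<le> e * (b - a)"
    by (rule integral_bound[OF ab]) (auto intro!: continuous_intros c e)
  then show ?thesis unfolding eq .
qed

lemma integral_split_sum:
  fixes \<phi> :: "real \<Rightarrow> 'b::banach"
  assumes h: "h > 0" and c: "continuous_on {0..real n * h} \<phi>" and m: "m \<le> n"
  shows "integral {0..real m * h} \<phi> = (\<Sum>k<m. integral {real k * h..real (Suc k) * h} \<phi>)"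
  using m
proof (induction m)
  case 0
  then show ?case by simp
next
  case (Suc m)
  have i: "\<phi> integrable_on {0..real (Suc m) * h}"
    by (rule integrable_continuous_real, rule continuous_on_subset[OF c])
       (use Suc.prems h in \<open>auto intro: mult_right_mono\<close>)
  have "integral {0..real (Suc m) * h} \<phi> = integral {0..real m * h} \<phi> + integral {real m * h..real (Suc m) * h} \<phi>"
    by (rule Henstock_Kurzweil_Integration.integral_combine[OF _ _ i, symmetric]) (use h in \<open>auto intro: mult_right_mono\<close>)
  then show ?case using Suc by simp
qed

lemma riemann_left_tendsto:
  fixes \<phi> :: "real \<Rightarrow> 'b::banach"
  assumes t: "t > 0" and c: "continuous_on {0..t} \<phi>"
  shows "(\<lambda>n. (t / real n) *\<^sub>R (\<Sum>k<n. \<phi> (real k * t / real n))) \<longlonglongrightarrow> integral {0..t} \<phi>"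
proof (rule LIMSEQ_I)
  fix e :: real assume e: "e > 0"
  define e' where "e' = e / (2 * t)"
  have e': "e' > 0" using e t by (simp add: e'_def)
  have uc: "uniformly_continuous_on {0..t} \<phi>"
    using c by (rule compact_uniformly_continuous) simp
  then obtain d where d: "d > 0" and dd: "\<And>x y. x \<in> {0..t} \<Longrightarrow> y \<in> {0..t} \<Longrightarrow> dist y x < d \<Longrightarrow> dist (\<phi> y) (\<phi> x) < e'"
    unfolding uniformly_continuous_on_def using e' by metis
  obtain N :: nat where N: "t / d < real N" using reals_Archimedean2 by blast
  show "\<exists>no. \<forall>n\<ge>no. norm ((t / real n) *\<^sub>R (\<Sum>k<n. \<phi> (real k * t / real n)) - integral {0..t} \<phi>) < e"
  proof (intro exI allI impI)
    fix n assume nN: "n \<ge> Suc N"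
    define h where "h = t / real n"
    have n0: "real n > 0" using nN by simp
    have h: "h > 0" using t n0 by (simp add: h_def)
    have hN: "real n * h = t" using n0 by (simp add: h_def)
    have "t / d < real n" using N nN by linarith
    then have hd: "h < d" using d n0 t by (simp add: h_def field_simps)
    have pts: "real k * t / real n = real k * h" for k by (simp add: h_def)
    have c': "continuous_on {0..real n * h} \<phi>" using c hN by simp
    have split: "integral {0..t} \<phi> = (\<Sum>k<n. integral {real k * h..real (Suc k) * h} \<phi>)"
      using integral_split_sum[OF h c' order_refl] hN by simp
    have piece: "norm (integral {real k * h..real (Suc k) * h} \<phi> - h *\<^sub>R \<phi> (real k * h)) \<le> e' * h"
      if k: "k < n" for k
    proof -
      have sub: "{real k * h..real (Suc k) * h} \<subseteq> {0..t}"
      proof -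
        have "real (Suc k) * h \<le> real n * h" using k h by (intro mult_right_mono) auto
        moreover have "real k * h \<le> real (Suc k) * h" using h by (intro mult_right_mono) auto
        ultimately have "real k * h \<le> t" "real (Suc k) * h \<le> t" using hN by linarith+
        moreover have "0 \<le> real k * h" using h by simp
        ultimately show ?thesis unfolding subset_iff atLeastAtMost_iff by (meson order_trans)
      qed
      have "norm (integral {real k * h..real (Suc k) * h} \<phi> - (real (Suc k) * h - real k * h) *\<^sub>R \<phi> (real k * h))
          \<le> e' * (real (Suc k) * h - real k * h)"
      proof (rule integral_piece_bound)
        show "real k * h \<le> real (Suc k) * h" using h by (intro mult_right_mono) auto
        show "continuous_on {real k * h..real (Suc k) * h} \<phi>" by (rule continuous_on_subset[OF c sub])
        fix x assume x: "x \<in> {real k * h..real (Suc k) * h}"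
        have "dist x (real k * h) < d"
          using x hd by (auto simp: dist_real_def algebra_simps)
        moreover have "real k * h \<in> {0..t}"
          by (rule subsetD[OF sub]) (use h in \<open>auto intro: mult_right_mono\<close>)
        ultimately have "dist (\<phi> x) (\<phi> (real k * h)) < e'" using dd[of "real k * h" x] x sub by auto
        then show "norm (\<phi> x - \<phi> (real k * h)) \<le> e'" by (simp add: dist_norm)
      qed
      moreover have "real (Suc k) * h - real k * h = h" by (simp add: algebra_simps)
      ultimately show ?thesis by simp
    qed
    have "norm ((t / real n) *\<^sub>R (\<Sum>k<n. \<phi> (real k * t / real n)) - integral {0..t} \<phi>)
        = norm (\<Sum>k<n. integral {real k * h..real (Suc k) * h} \<phi> - h *\<^sub>R \<phi> (real k * h))"
      by (simp add: split pts h_def[symmetric] scaleR_sum_right sum_subtractf norm_minus_commute)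
    also have "\<dots> \<le> (\<Sum>k<n. norm (integral {real k * h..real (Suc k) * h} \<phi> - h *\<^sub>R \<phi> (real k * h)))"
      by (rule norm_sum)
    also have "\<dots> \<le> (\<Sum>k<n. e' * h)"
      by (rule sum_mono) (use piece in auto)
    also have "\<dots> = e' * t" using hN by (simp add: algebra_simps)
    also have "\<dots> < e" using e t by (simp add: e'_def)
    finally show "norm ((t / real n) *\<^sub>R (\<Sum>k<n. \<phi> (real k * t / real n)) - integral {0..t} \<phi>) < e" .
  qed
qed


lemma closed_indicator_approx:
  fixes F :: "'a::metric_space set"
  assumes "closed F" "F \<noteq> {}"
  shows "(\<lambda>k. max 0 (1 - real k * infdist x F)) \<longlonglongrightarrow> indicator F x"
proof (cases "x \<in> F")
  case True
  then have "infdist x F = 0" using assms in_closed_iff_infdist_zero by blast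
  then show ?thesis using True by simp
next
  case False
  then have pos: "infdist x F > 0" using assms infdist_pos_not_in_closed by blast
  obtain N :: nat where N: "1 / infdist x F < real N" using reals_Archimedean2 by blast
  have ev: "eventually (\<lambda>k. max 0 (1 - real k * infdist x F) = 0) sequentially"
  proof (rule eventually_sequentiallyI[of N])
    fix k assume "N \<le> k"
    then have "1 / infdist x F < real k" using N by linarith
    then have "1 < real k * infdist x F" using pos by (simp add: field_simps)
    then show "max 0 (1 - real k * infdist x F) = 0" by simp
  qed
  have "(\<lambda>k. max 0 (1 - real k * infdist x F)) \<longlonglongrightarrow> 0"
    by (rule tendsto_eventually) (use ev in \<open>simp add: eventually_mono\<close>)
  then show ?thesis using False by simp
qed

lemma measure_eq_bounded_continuous:
  fixes \<mu> \<nu> :: "'a::metric_space measure"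
  assumes s\<mu>: "sets \<mu> = sets borel" and s\<nu>: "sets \<nu> = sets borel"
    and f\<mu>: "finite_measure \<mu>" and f\<nu>: "finite_measure \<nu>"
    and eq: "\<And>g::'a \<Rightarrow> real. continuous_on UNIV g \<Longrightarrow> (\<And>x. 0 \<le> g x) \<Longrightarrow> (\<And>x. g x \<le> 1) \<Longrightarrow>
              (\<integral>x. g x \<partial>\<mu>) = (\<integral>x. g x \<partial>\<nu>)"
  shows "\<mu> = \<nu>"
proof -
  interpret mu: finite_measure \<mu> by fact
  interpret nu: finite_measure \<nu> by fact
  have sb: "sets (borel :: 'a measure) = sigma_sets UNIV (Collect closed)"
    by (subst borel_eq_closed) (simp add: sets_measure_of)
  have closed_eq: "emeasure \<mu> F = emeasure \<nu> F" if F: "closed F" for F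
  proof (cases "F = {}")
    case True then show ?thesis by simp
  next
    case False
    define g where "g k x = max 0 (1 - real k * infdist x F)" for k x
    have gc: "continuous_on UNIV (g k)" for k unfolding g_def by (intro continuous_intros)
    have gm: "g k \<in> borel_measurable borel" for k by (rule borel_measurable_continuous_onI[OF gc])
    have gm\<mu>: "g k \<in> borel_measurable \<mu>" for k using gm measurable_cong_sets[OF s\<mu> refl] by blast
    have gm\<nu>: "g k \<in> borel_measurable \<nu>" for k using gm measurable_cong_sets[OF s\<nu> refl] by blast
    have Fb: "F \<in> sets borel" using F by (rule borel_closed)
    have lim: "(\<lambda>k. g k x) \<longlonglongrightarrow> indicator F x" for x
      unfolding g_def by (rule closed_indicator_approx[OF F False])
    have bnd: "norm (g k x) \<le> 1" for k x
      unfolding g_def by (auto simp: infdist_nonneg)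
    have ind\<mu>: "indicator F \<in> borel_measurable \<mu>" using Fb s\<mu> by simp
    have ind\<nu>: "indicator F \<in> borel_measurable \<nu>" using Fb s\<nu> by simp
    have L1: "(\<lambda>k. integral\<^sup>L \<mu> (g k)) \<longlonglongrightarrow> integral\<^sup>L \<mu> (indicator F)"
      by (rule integral_dominated_convergence[where w="\<lambda>_. 1"]) (use gm\<mu> ind\<mu> lim bnd in auto)
    have L2: "(\<lambda>k. integral\<^sup>L \<nu> (g k)) \<longlonglongrightarrow> integral\<^sup>L \<nu> (indicator F)"
      by (rule integral_dominated_convergence[where w="\<lambda>_. 1"]) (use gm\<nu> ind\<nu> lim bnd in auto)
    have "integral\<^sup>L \<mu> (g k) = integral\<^sup>L \<nu> (g k)" for k
      by (rule eq) (use gc in \<open>auto simp: g_def infdist_nonneg\<close>)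
    then have "integral\<^sup>L \<mu> (indicator F) = (integral\<^sup>L \<nu> (indicator F) :: real)"
      using L1 L2 LIMSEQ_unique by simp
    then have "measure \<mu> F = measure \<nu> F"
      using Fb s\<mu> s\<nu> by simp
    then show ?thesis
      using Fb s\<mu> s\<nu> by (simp add: mu.emeasure_eq_measure nu.emeasure_eq_measure)
  qed
  show ?thesis
  proof (rule measure_eqI_generator_eq[where E="Collect closed" and \<Omega>=UNIV and A="\<lambda>_. UNIV"])
    show "Int_stable (Collect closed)" by (auto simp: Int_stable_def)
  qed (use closed_eq sb s\<mu> s\<nu> in auto)
qed


lemma holder_ineq:
  fixes u v :: "'a \<Rightarrow> real"
  assumes \<alpha>: "1 < \<alpha>" and q: "q = \<alpha> / (\<alpha> - 1)"
    and [measurable]: "u \<in> borel_measurable M" "v \<in> borel_measurable M"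
    and u0: "\<And>x. 0 \<le> u x" and v0: "\<And>x. 0 \<le> v x"
    and iu: "integrable M (\<lambda>x. u x powr \<alpha>)" and iv: "integrable M (\<lambda>x. v x powr q)"
    and iuv: "integrable M (\<lambda>x. u x * v x)"
  shows "(\<integral>x. u x * v x \<partial>M) \<le> (\<integral>x. u x powr \<alpha> \<partial>M) powr (1/\<alpha>) * (\<integral>x. v x powr q \<partial>M) powr (1/q)"
proof -
  define A where "A = (\<integral>x. u x powr \<alpha> \<partial>M)"
  define C where "C = (\<integral>x. v x powr q \<partial>M)"
  have q1: "q > 1" using \<alpha> by (simp add: q field_simps)
  have pq: "1/\<alpha> + 1/q = 1" using \<alpha> by (simp add: q field_simps)
  have A0: "A \<ge> 0" unfolding A_def by (rule integral_nonneg_AE) simp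
  have C0: "C \<ge> 0" unfolding C_def by (rule integral_nonneg_AE) simp
  have R0: "0 \<le> A powr (1/\<alpha>) * C powr (1/q)" by simp
  show ?thesis
  proof (cases "A = 0 \<or> C = 0")
    case True
    have "AE x in M. u x * v x = 0"
    proof (cases "A = 0")
      case True
      then have "AE x in M. u x powr \<alpha> = 0"
        using iu by (subst integral_nonneg_eq_0_iff_AE[symmetric]) (auto simp: A_def)
      then show ?thesis by eventually_elim (use \<alpha> in simp)
    next
      case False
      then have "C = 0" using \<open>A = 0 \<or> C = 0\<close> by simp
      then have "AE x in M. v x powr q = 0"
        using iv by (subst integral_nonneg_eq_0_iff_AE[symmetric]) (auto simp: C_def)
      then show ?thesis by eventually_elim (use q1 in simp)
    qed
    then have "(\<integral>x. u x * v x \<partial>M) = 0" by (simp add: integral_eq_zero_AE)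
    then show ?thesis using R0 by (simp add: A_def C_def)
  next
    case False
    define a where "a = A powr (1/\<alpha>)"
    define c where "c = C powr (1/q)"
    have a: "a > 0" and c: "c > 0" using False A0 C0 by (auto simp: a_def c_def)
    have aa: "a powr \<alpha> = A" using A0 \<alpha> by (simp add: a_def powr_powr)
    have cc: "c powr q = C" using C0 q1 by (simp add: c_def powr_powr)
    have pw: "u x * v x / (a * c) \<le> u x powr \<alpha> / (\<alpha> * A) + v x powr q / (q * C)" for x
    proof -
      have "(u x / a) * (v x / c) \<le> (u x / a) powr \<alpha> / \<alpha> + (v x / c) powr q / q"
        by (rule Youngs_inequality[OF \<alpha> q1 pq]) (use u0 v0 a c in auto)
      also have "(u x / a) powr \<alpha> = u x powr \<alpha> / A" using u0 a by (simp add: powr_divide aa)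
      also have "(v x / c) powr q = v x powr q / C" using v0 c by (simp add: powr_divide cc)
      finally show ?thesis by (simp add: field_simps)
    qed
    have "(\<integral>x. u x * v x / (a * c) \<partial>M) \<le> (\<integral>x. u x powr \<alpha> / (\<alpha> * A) + v x powr q / (q * C) \<partial>M)"
      by (rule integral_mono) (use iuv iu iv pw in auto)
    also have "\<dots> = A / (\<alpha> * A) + C / (q * C)"
      using iu iv by (simp add: A_def C_def)
    also have "\<dots> = 1" using False A0 C0 pq by (simp add: field_simps)
    finally have "(\<integral>x. u x * v x \<partial>M) / (a * c) \<le> 1" by simp
    then show ?thesis using a c by (simp add: a_def c_def A_def C_def field_simps)
  qed
qed


lemma measurable_vec_lambda[measurable (raw)]:
  fixes f :: "'n::finite \<Rightarrow> 'a \<Rightarrow> real"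
  assumes "\<And>i. f i \<in> borel_measurable M"
  shows "(\<lambda>x. \<chi> i. f i x) \<in> borel_measurable M"
proof (subst borel_measurable_euclidean_space, intro ballI)
  fix b :: "real ^ 'n" assume "b \<in> Basis"
  then obtain i where b: "b = axis i 1" by (auto simp: Basis_vec_def)
  show "(\<lambda>x. (\<chi> i. f i x) \<bullet> b) \<in> borel_measurable M"
    unfolding b inner_axis using assms by simp
qed

definition XK :: "(real \<Rightarrow> 'a \<Rightarrow> real ^ 'n::finite) \<Rightarrow> real \<Rightarrow> nat \<Rightarrow> 'a \<Rightarrow> (real ^ 'n) \<times> (real ^ 'n)" where
  "XK B h n \<omega> = (B (real n * h) \<omega>, h *\<^sub>R (\<Sum>k<n. B (real k * h) \<omega>))"

definition Lmap :: "real \<Rightarrow> nat \<Rightarrow> (nat \<times> 'n::finite \<Rightarrow> real) \<Rightarrow> (real ^ 'n) \<times> (real ^ 'n)" where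
  "Lmap h n z = ((\<chi> i. \<Sum>k<n. z (k, i)), (\<chi> i. h * (\<Sum>k<n. \<Sum>l<k. z (l, i))))"

lemma Lmap_add:
  "Lmap h n (\<lambda>x\<in>{..<n} \<times> UNIV. z x + d x) = Lmap h n z + Lmap h n d"
  by (simp add: Lmap_def vec_eq_iff sum.distrib algebra_simps)

lemma Lmap_cong:
  "Lmap h n (\<lambda>x\<in>{..<n} \<times> UNIV. z x) = Lmap h n z"
  by (simp add: Lmap_def)

lemma incr_telescope:
  fixes B :: "real \<Rightarrow> 'a \<Rightarrow> real ^ 'n::finite"
  assumes "B 0 \<omega> = 0"
  shows "(\<Sum>l<k. incr B h (l, i) \<omega>) = B (real k * h) \<omega> $ i"
proof (induction k)
  case 0 then show ?case using assms by simp
next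
  case (Suc k) then show ?case by (simp add: incr_def)
qed

lemma Lmap_incr:
  fixes B :: "real \<Rightarrow> 'a \<Rightarrow> real ^ 'n::finite"
  assumes "B 0 \<omega> = 0"
  shows "Lmap h n (\<lambda>x. incr B h x \<omega>) = XK B h n \<omega>"
  by (simp add: Lmap_def XK_def vec_eq_iff incr_telescope[where B=B and \<omega>=\<omega>, OF assms] sum_distrib_left)

lemma Lmap_measurable:
  "Lmap h n \<in> borel_measurable (PiM ({..<n} \<times> (UNIV :: 'n::finite set)) (\<lambda>_. lborel))"
proof -
  have c: "(\<lambda>z. z (k, i)) \<in> borel_measurable (PiM ({..<n} \<times> (UNIV :: 'n set)) (\<lambda>_. lborel))" if "k < n" for k i
    using measurable_component_singleton[of "(k, i)" "{..<n} \<times> (UNIV :: 'n set)" "\<lambda>_. lborel"] that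
    measurable_cong_sets[OF refl sets_lborel] by auto
  have s1: "(\<lambda>z. \<Sum>k<n. z (k, i)) \<in> borel_measurable (PiM ({..<n} \<times> (UNIV :: 'n set)) (\<lambda>_. lborel))" for i
    by (rule borel_measurable_sum) (use c in auto)
  have s2: "(\<lambda>z. h * (\<Sum>k<n. \<Sum>l<k. z (l, i))) \<in> borel_measurable (PiM ({..<n} \<times> (UNIV :: 'n set)) (\<lambda>_. lborel))" for i
    by (intro borel_measurable_times borel_measurable_const borel_measurable_sum) (use c in auto)
  show ?thesis
    unfolding Lmap_def
    by (intro borel_measurable_Pair measurable_vec_lambda s1 s2)
qed

lemma core_grid:
  fixes B :: "real \<Rightarrow> 'a \<Rightarrow> real ^ 'n::finite"
  assumes BM: "brownian_motion M \<sigma> B" and h: "h > 0" and n: "n > 0" and \<sigma>: "\<sigma> > 0"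
    and g[measurable]: "g \<in> borel_measurable borel"
  shows "(\<integral>\<^sup>+\<omega>. g (XK B h n \<omega> + Lmap h n \<delta>) \<partial>M)
       = (\<integral>\<^sup>+\<omega>. (\<Prod>x\<in>{..<n} \<times> UNIV. ennreal (rho1 (\<sigma> * sqrt h) (\<delta> x) (incr B h x \<omega>))) * g (XK B h n \<omega>) \<partial>M)"
proof -
  let ?I = "{..<n} \<times> (UNIV :: 'n set)"
  have G: "(\<lambda>z. g (Lmap h n z)) \<in> borel_measurable (PiM ?I (\<lambda>_. lborel))"
    by (rule measurable_compose[OF Lmap_measurable g])
  have "(\<integral>\<^sup>+\<omega>. g (XK B h n \<omega> + Lmap h n \<delta>) \<partial>M) = (\<integral>\<^sup>+\<omega>. g (Lmap h n (\<lambda>x\<in>?I. incr B h x \<omega> + \<delta> x)) \<partial>M)"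
    by (intro nn_integral_cong) (simp add: Lmap_add Lmap_incr BM_zero[OF BM])
  also have "\<dots> = (\<integral>\<^sup>+\<omega>. (\<Prod>x\<in>?I. ennreal (rho1 (\<sigma> * sqrt h) (\<delta> x) (incr B h x \<omega>)))
             * g (Lmap h n (\<lambda>x\<in>?I. incr B h x \<omega>)) \<partial>M)"
    by (rule BM_shift[OF BM h n \<sigma> G])
  also have "\<dots> = (\<integral>\<^sup>+\<omega>. (\<Prod>x\<in>?I. ennreal (rho1 (\<sigma> * sqrt h) (\<delta> x) (incr B h x \<omega>))) * g (XK B h n \<omega>) \<partial>M)"
    by (intro nn_integral_cong) (simp add: Lmap_cong Lmap_incr BM_zero[OF BM])
  finally show ?thesis .
qed


definition dfine :: "real \<Rightarrow> nat \<Rightarrow> (nat \<Rightarrow> real ^ 'n::finite) \<Rightarrow> nat \<times> 'n \<Rightarrow> real" where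
  "dfine h K v x = h * (v (fst x div K) $ snd x)"

definition rhoC :: "(real \<Rightarrow> 'a \<Rightarrow> real ^ 'n::finite) \<Rightarrow> real \<Rightarrow> real \<Rightarrow> nat \<Rightarrow> (nat \<Rightarrow> real ^ 'n) \<Rightarrow> 'a \<Rightarrow> real" where
  "rhoC B \<sigma> \<tau> N v \<omega> = exp (\<Sum>j<N. \<Sum>i\<in>UNIV. incr B \<tau> (j, i) \<omega> * (v j $ i) / \<sigma>\<^sup>2 - \<tau> * (v j $ i)\<^sup>2 / (2 * \<sigma>\<^sup>2))"

definition cvec :: "real \<Rightarrow> nat \<Rightarrow> (nat \<Rightarrow> real ^ 'n::finite) \<Rightarrow> (real ^ 'n) \<times> (real ^ 'n)" where
  "cvec \<tau> N v = ((\<chi> i. \<tau> * (\<Sum>j<N. v j $ i)), (\<chi> i. \<tau>\<^sup>2 * (\<Sum>j<N. (real N - real j - 1/2) * v j $ i)))"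

lemma prod_rho1:
  assumes h: "h > 0" and \<sigma>: "\<sigma> > 0" and I: "finite I"
  shows "(\<Prod>x\<in>I. ennreal (rho1 (\<sigma> * sqrt h) (h * w x) (y x)))
       = ennreal (exp (\<Sum>x\<in>I. y x * w x / \<sigma>\<^sup>2 - h * (w x)\<^sup>2 / (2 * \<sigma>\<^sup>2)))"
proof -
  have e: "rho1 (\<sigma> * sqrt h) (h * w x) (y x) = exp (y x * w x / \<sigma>\<^sup>2 - h * (w x)\<^sup>2 / (2 * \<sigma>\<^sup>2))" for x
  proof -
    have "(\<sigma> * sqrt h)\<^sup>2 = \<sigma>\<^sup>2 * h" using h by (simp add: power_mult_distrib)
    then show ?thesis using h \<sigma> unfolding rho1_def by (simp add: field_simps power2_eq_square)
  qed
  show ?thesis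
    by (simp add: e prod_ennreal exp_sum I)
qed

lemma double_sum_weights:
  fixes a :: "nat \<Rightarrow> real"
  shows "(\<Sum>k<n. \<Sum>l<k. a l) = (\<Sum>l<n. (real n - real l - 1) * a l)"
proof (induction n)
  case 0 then show ?case by simp
next
  case (Suc n)
  have "(\<Sum>k<Suc n. \<Sum>l<k. a l) = (\<Sum>l<n. (real n - real l - 1) * a l) + (\<Sum>l<n. a l)"
    using Suc by simp
  also have "\<dots> = (\<Sum>l<n. (real (Suc n) - real l - 1) * a l)"
    by (simp add: sum.distrib[symmetric] algebra_simps)
  also have "\<dots> = (\<Sum>l<Suc n. (real (Suc n) - real l - 1) * a l)"
    by simp
  finally show ?case .
qed

lemma sum_block_const:
  fixes F :: "nat \<Rightarrow> nat \<Rightarrow> real"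
  assumes K: "K > 0"
  shows "(\<Sum>k<N * K. F (k div K) k) = (\<Sum>j<N. \<Sum>k\<in>{j * K..<j * K + K}. F j k)"
proof -
  have "(\<Sum>k<N * K. F (k div K) k) = (\<Sum>j<N. \<Sum>k\<in>{j * K..<j * K + K}. F (k div K) k)"
    by (rule sum.nat_group[symmetric])
  also have "\<dots> = (\<Sum>j<N. \<Sum>k\<in>{j * K..<j * K + K}. F j k)"
  proof (intro sum.cong refl)
    fix j k assume "k \<in> {j * K..<j * K + K}"
    then have "k div K = j" using K by (auto intro!: div_nat_eqI simp: algebra_simps)
    then show "F (k div K) k = F j k" by simp
  qed
  finally show ?thesis .
qed

lemma incr_block:
  fixes B :: "real \<Rightarrow> 'a \<Rightarrow> real ^ 'n::finite"
  assumes K: "K > 0" and h: "h = \<tau> / real K"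
  shows "(\<Sum>k\<in>{j * K..<j * K + K}. incr B h (k, i) \<omega>) = incr B \<tau> (j, i) \<omega>"
proof -
  have "(\<Sum>k\<in>{j * K..<j * K + K}. incr B h (k, i) \<omega>)
      = (\<Sum>k\<in>{j * K..<j * K + K}. B (real (Suc k) * h) \<omega> $ i - B (real k * h) \<omega> $ i)"
    by (simp add: incr_def)
  also have "\<dots> = B (real (j * K + K) * h) \<omega> $ i - B (real (j * K) * h) \<omega> $ i"
    by (rule sum_Suc_diff'[where f="\<lambda>k. B (real k * h) \<omega> $ i"]) simp
  also have "real (j * K + K) * h = real (Suc j) * \<tau>" using K by (simp add: h field_simps)
  also have "real (j * K) * h = real j * \<tau>" using K by (simp add: h field_simps)
  finally show ?thesis by (simp add: incr_def)
qed

lemma fine_to_coarse: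
  fixes B :: "real \<Rightarrow> 'a \<Rightarrow> real ^ 'n::finite"
  assumes K: "K > 0" and h: "h = \<tau> / real K"
  shows "(\<Sum>x\<in>{..<N * K} \<times> UNIV. incr B h x \<omega> * (v (fst x div K) $ snd x) / \<sigma>\<^sup>2 - h * (v (fst x div K) $ snd x)\<^sup>2 / (2 * \<sigma>\<^sup>2))
       = (\<Sum>j<N. \<Sum>i\<in>UNIV. incr B \<tau> (j, i) \<omega> * (v j $ i) / \<sigma>\<^sup>2 - \<tau> * (v j $ i)\<^sup>2 / (2 * \<sigma>\<^sup>2))"
proof -
  have "(\<Sum>x\<in>{..<N * K} \<times> UNIV. incr B h x \<omega> * (v (fst x div K) $ snd x) / \<sigma>\<^sup>2 - h * (v (fst x div K) $ snd x)\<^sup>2 / (2 * \<sigma>\<^sup>2))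
      = (\<Sum>k<N * K. \<Sum>i\<in>UNIV. incr B h (k, i) \<omega> * (v (k div K) $ i) / \<sigma>\<^sup>2 - h * (v (k div K) $ i)\<^sup>2 / (2 * \<sigma>\<^sup>2))"
    by (simp add: sum.cartesian_product case_prod_beta)
  also have "\<dots> = (\<Sum>j<N. \<Sum>k\<in>{j * K..<j * K + K}. \<Sum>i\<in>UNIV. incr B h (k, i) \<omega> * (v j $ i) / \<sigma>\<^sup>2 - h * (v j $ i)\<^sup>2 / (2 * \<sigma>\<^sup>2))"
    by (rule sum_block_const[OF K])
  also have "\<dots> = (\<Sum>j<N. \<Sum>i\<in>UNIV. incr B \<tau> (j, i) \<omega> * (v j $ i) / \<sigma>\<^sup>2 - \<tau> * (v j $ i)\<^sup>2 / (2 * \<sigma>\<^sup>2))"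
  proof (rule sum.cong[OF refl])
    fix j
    have "(\<Sum>k\<in>{j * K..<j * K + K}. \<Sum>i\<in>UNIV. incr B h (k, i) \<omega> * (v j $ i) / \<sigma>\<^sup>2 - h * (v j $ i)\<^sup>2 / (2 * \<sigma>\<^sup>2))
        = (\<Sum>i\<in>UNIV. (\<Sum>k\<in>{j * K..<j * K + K}. incr B h (k, i) \<omega>) * (v j $ i) / \<sigma>\<^sup>2 - real K * (h * (v j $ i)\<^sup>2) / (2 * \<sigma>\<^sup>2))"
      by (subst sum.swap) (simp add: sum_subtractf sum_distrib_right sum_divide_distrib)
    also have "\<dots> = (\<Sum>i\<in>UNIV. incr B \<tau> (j, i) \<omega> * (v j $ i) / \<sigma>\<^sup>2 - \<tau> * (v j $ i)\<^sup>2 / (2 * \<sigma>\<^sup>2))"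
      using K by (simp only: incr_block[OF K h]) (simp add: h)
    finally show "(\<Sum>k\<in>{j * K..<j * K + K}. \<Sum>i\<in>UNIV. incr B h (k, i) \<omega> * (v j $ i) / \<sigma>\<^sup>2 - h * (v j $ i)\<^sup>2 / (2 * \<sigma>\<^sup>2))
        = (\<Sum>i\<in>UNIV. incr B \<tau> (j, i) \<omega> * (v j $ i) / \<sigma>\<^sup>2 - \<tau> * (v j $ i)\<^sup>2 / (2 * \<sigma>\<^sup>2))" .
  qed
  finally show ?thesis .
qed

lemma prod_rho_fine:
  fixes B :: "real \<Rightarrow> 'a \<Rightarrow> real ^ 'n::finite"
  assumes K: "K > 0" and h: "h = \<tau> / real K" and \<tau>: "\<tau> > 0" and \<sigma>: "\<sigma> > 0"
  shows "(\<Prod>x\<in>{..<N * K} \<times> UNIV. ennreal (rho1 (\<sigma> * sqrt h) (dfine h K v x) (incr B h x \<omega>)))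
       = ennreal (rhoC B \<sigma> \<tau> N v \<omega>)"
proof -
  have hp: "h > 0" using K \<tau> by (simp add: h)
  show ?thesis
    unfolding dfine_def rhoC_def
    by (subst prod_rho1[OF hp \<sigma>]) (simp_all add: fine_to_coarse[OF K h])
qed

lemma sum_nat_real: "(\<Sum>r<K. real r) = real K * (real K - 1) / 2"
  by (induction K) (simp_all add: field_simps)

lemma Lmap_dfine:
  assumes K: "K > 0" and h: "h = \<tau> / real K"
  shows "Lmap h (N * K) (dfine h K v)
       = cvec \<tau> N v - (0, \<chi> i. \<tau>\<^sup>2 / (2 * real K) * (\<Sum>j<N. v j $ i))"
proof -
  have Kr: "real K > 0" using K by simp
  have c1: "(\<Sum>k<N * K. dfine h K v (k, i)) = \<tau> * (\<Sum>j<N. v j $ i)" for i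
  proof -
    have "(\<Sum>k<N * K. dfine h K v (k, i)) = (\<Sum>j<N. \<Sum>k\<in>{j * K..<j * K + K}. h * v j $ i)"
      unfolding dfine_def using sum_block_const[OF K, where F="\<lambda>j k. h * v j $ i"] by simp
    also have "\<dots> = (\<Sum>j<N. \<tau> * v j $ i)" using Kr by (simp add: h)
    finally show ?thesis by (simp add: sum_distrib_left)
  qed
  have c2: "h * (\<Sum>k<N * K. \<Sum>l<k. dfine h K v (l, i))
      = \<tau>\<^sup>2 * (\<Sum>j<N. (real N - real j - 1/2) * v j $ i) - \<tau>\<^sup>2 / (2 * real K) * (\<Sum>j<N. v j $ i)" for i
  proof -
    have "(\<Sum>k<N * K. \<Sum>l<k. dfine h K v (l, i)) = (\<Sum>l<N * K. (real (N * K) - real l - 1) * dfine h K v (l, i))"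
      by (rule double_sum_weights)
    also have "\<dots> = (\<Sum>j<N. \<Sum>k\<in>{j * K..<j * K + K}. (real (N * K) - real k - 1) * (h * v j $ i))"
      unfolding dfine_def using sum_block_const[OF K, where F="\<lambda>j k. (real (N * K) - real k - 1) * (h * v j $ i)"] by simp
    also have "\<dots> = (\<Sum>j<N. h * v j $ i * (real K * (real (N * K) - real (j * K) - 1) - real K * (real K - 1) / 2))"
    proof (rule sum.cong[OF refl])
      fix j
      have "(\<Sum>k\<in>{j * K..<j * K + K}. (real (N * K) - real k - 1) * (h * v j $ i))
          = (\<Sum>r<K. (real (N * K) - real (j * K) - 1 - real r) * (h * v j $ i))"
      proof -
        have "{j * K..<j * K + K} = {0 + j * K..<K + j * K}" by (simp add: add.commute)
        then have "(\<Sum>k\<in>{j * K..<j * K + K}. (real (N * K) - real k - 1) * (h * v j $ i))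
            = (\<Sum>r\<in>{0..<K}. (real (N * K) - real (r + j * K) - 1) * (h * v j $ i))"
          by (simp only: sum.shift_bounds_nat_ivl)
        then show ?thesis by (simp add: atLeast0LessThan algebra_simps)
      qed
      also have "\<dots> = h * v j $ i * (real K * (real (N * K) - real (j * K) - 1) - (\<Sum>r<K. real r))"
      proof -
        define c where "c = real (N * K) - real (j * K) - 1"
        define w where "w = h * v j $ i"
        have "(\<Sum>r<K. (c - real r) * w) = (\<Sum>r<K. (c - real r)) * w" by (simp add: sum_distrib_right)
        also have "(\<Sum>r<K. (c - real r)) = real K * c - (\<Sum>r<K. real r)" by (simp add: sum_subtractf)
        finally show ?thesis by (simp add: c_def w_def mult.commute)
      qed
      also have "\<dots> = h * v j $ i * (real K * (real (N * K) - real (j * K) - 1) - real K * (real K - 1) / 2)"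
        by (simp add: sum_nat_real)
      finally show "(\<Sum>k\<in>{j * K..<j * K + K}. (real (N * K) - real k - 1) * (h * v j $ i))
          = h * v j $ i * (real K * (real (N * K) - real (j * K) - 1) - real K * (real K - 1) / 2)" .
    qed
    finally have eq: "(\<Sum>k<N * K. \<Sum>l<k. dfine h K v (l, i))
        = (\<Sum>j<N. h * v j $ i * (real K * (real (N * K) - real (j * K) - 1) - real K * (real K - 1) / 2))" .
    have "h * (h * v j $ i * (real K * (real (N * K) - real (j * K) - 1) - real K * (real K - 1) / 2))
        = \<tau>\<^sup>2 * ((real N - real j - 1/2) * v j $ i) - \<tau>\<^sup>2 / (2 * real K) * v j $ i" for j
      using Kr by (simp add: h field_simps power2_eq_square)
    then show ?thesis
      unfolding eq by (simp add: sum_distrib_left sum_subtractf)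
  qed
  show ?thesis
    by (simp add: Lmap_def cvec_def vec_eq_iff c1 c2)
qed


definition Xp :: "(real \<Rightarrow> 'a \<Rightarrow> real ^ 'n::finite) \<Rightarrow> real \<Rightarrow> 'a \<Rightarrow> (real ^ 'n) \<times> (real ^ 'n)" where
  "Xp B t \<omega> = (B t \<omega>, integral {0..t} (\<lambda>s. B s \<omega>))"

lemma aux_cancel: "(a::real) \<noteq> 0 \<Longrightarrow> b \<noteq> 0 \<Longrightarrow> a * b * (t / a / b) = t"
  by simp

context
  fixes M :: "'a measure" and \<sigma> t :: real and B :: "real \<Rightarrow> 'a \<Rightarrow> real ^ 'n::finite"
  assumes BM: "brownian_motion M \<sigma> B" and \<sigma>: "\<sigma> > 0" and t: "t > 0"
begin

lemma XK_meas:
  assumes h: "h > 0"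
  shows "XK B h n \<in> borel_measurable M"
proof -
  have m: "B s \<in> borel_measurable M" if "s \<ge> 0" for s using BM_meas[OF BM that] .
  show ?thesis
    unfolding XK_def
    by (intro borel_measurable_Pair borel_measurable_scaleR borel_measurable_const borel_measurable_sum m)
       (use h in auto)
qed

lemma XK_lim:
  assumes N: "N > 0" and \<omega>: "\<omega> \<in> space M"
  shows "(\<lambda>k. XK B (t / real N / real (Suc k)) (N * Suc k) \<omega>) \<longlonglongrightarrow> Xp B t \<omega>"
proof -
  define R where "R m = (t / real m) *\<^sub>R (\<Sum>k<m. B (real k * t / real m) \<omega>)" for m
  have c: "continuous_on {0..t} (\<lambda>s. B s \<omega>)"
    by (rule continuous_on_subset[OF BM_cont[OF BM \<omega>]]) auto
  have R: "R \<longlonglongrightarrow> integral {0..t} (\<lambda>s. B s \<omega>)"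
    unfolding R_def by (rule riemann_left_tendsto[OF t c])
  have sm: "strict_mono (\<lambda>k. N * Suc k)"
    using N by (simp add: strict_mono_Suc_iff)
  have R2: "(\<lambda>k. R (N * Suc k)) \<longlonglongrightarrow> integral {0..t} (\<lambda>s. B s \<omega>)"
    using LIMSEQ_subseq_LIMSEQ[OF R sm] by (simp add: o_def)
  have eq0: "XK B (t / real n) n \<omega> = (B t \<omega>, R n)" if "n > 0" for n
    using that unfolding XK_def R_def by simp
  have eq: "XK B (t / real N / real (Suc k)) (N * Suc k) \<omega> = (B t \<omega>, R (N * Suc k))" for k
  proof -
    have e: "t / real N / real (Suc k) = t / real (N * Suc k)"
      unfolding of_nat_mult by (simp add: divide_divide_eq_left)
    show ?thesis unfolding e by (rule eq0) (use N in simp)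
  qed
  show ?thesis
    unfolding eq Xp_def by (intro tendsto_Pair tendsto_const R2)
qed

lemma Xp_meas: "Xp B t \<in> borel_measurable M"
proof (rule borel_measurable_LIMSEQ_metric)
  show "XK B (t / real 1 / real (Suc k)) (1 * Suc k) \<in> borel_measurable M" for k
    by (rule XK_meas) (use t in simp)
  show "(\<lambda>k. XK B (t / real 1 / real (Suc k)) (1 * Suc k) \<omega>) \<longlonglongrightarrow> Xp B t \<omega>" if "\<omega> \<in> space M" for \<omega>
    by (rule XK_lim[OF _ that]) simp
qed

lemma rhoC_meas: "\<tau> > 0 \<Longrightarrow> rhoC B \<sigma> \<tau> N v \<in> borel_measurable M"
  unfolding rhoC_def using incr_measurable[OF BM] by measurable

lemma rhoC_moment:
  assumes N: "N > 0" and \<tau>: "\<tau> > 0"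
  shows "(\<integral>\<^sup>+\<omega>. ennreal (rhoC B \<sigma> \<tau> N v \<omega> powr q) \<partial>M)
       = ennreal (exp (q * (q - 1) * (\<Sum>x\<in>{..<N} \<times> (UNIV::'n set). (dfine \<tau> 1 v x)\<^sup>2) / (2 * (\<sigma> * sqrt \<tau>)\<^sup>2)))"
proof -
  have "rhoC B \<sigma> \<tau> N v \<omega> = (\<Prod>x\<in>{..<N} \<times> UNIV. rho1 (\<sigma> * sqrt \<tau>) (dfine \<tau> 1 v x) (incr B \<tau> x \<omega>))" for \<omega>
  proof -
    have "ennreal (rhoC B \<sigma> \<tau> N v \<omega>) = ennreal (\<Prod>x\<in>{..<N} \<times> UNIV. rho1 (\<sigma> * sqrt \<tau>) (dfine \<tau> 1 v x) (incr B \<tau> x \<omega>))"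
      using prod_rho_fine[where K=1 and h=\<tau> and \<tau>=\<tau> and \<sigma>=\<sigma> and N=N and v=v and B=B and \<omega>=\<omega>] \<tau> \<sigma> by (simp add: prod_ennreal rho1_def)
    then show ?thesis by (simp add: rho1_def rhoC_def prod_nonneg)
  qed
  then have "(\<integral>\<^sup>+\<omega>. ennreal (rhoC B \<sigma> \<tau> N v \<omega> powr q) \<partial>M)
      = (\<integral>\<^sup>+\<omega>. (\<Prod>x\<in>{..<N} \<times> UNIV. ennreal (rho1 (\<sigma> * sqrt \<tau>) (dfine \<tau> 1 v x) (incr B \<tau> x \<omega>) powr q)) \<partial>M)"
    by (simp add: prod_powr_distrib rho1_def prod_ennreal)
  also have "\<dots> = ennreal (exp (q * (q - 1) * (\<Sum>x\<in>{..<N} \<times> (UNIV::'n set). (dfine \<tau> 1 v x)\<^sup>2) / (2 * (\<sigma> * sqrt \<tau>)\<^sup>2)))"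
    by (rule BM_moment[OF BM \<tau> N \<sigma>])
  finally show ?thesis .
qed

end


context
  fixes M :: "'a measure" and \<sigma> t :: real and B :: "real \<Rightarrow> 'a \<Rightarrow> real ^ 'n::finite"
  assumes BM: "brownian_motion M \<sigma> B" and \<sigma>: "\<sigma> > 0" and t: "t > 0"
begin

lemma identity_discrete:
  assumes N: "N > 0" and g: "g \<in> borel_measurable borel"
  shows "(\<integral>\<^sup>+\<omega>. g (XK B (t / real N / real (Suc k)) (N * Suc k) \<omega>
              + Lmap (t / real N / real (Suc k)) (N * Suc k) (dfine (t / real N / real (Suc k)) (Suc k) v)) \<partial>M)
       = (\<integral>\<^sup>+\<omega>. ennreal (rhoC B \<sigma> (t / real N) N v \<omega>) * g (XK B (t / real N / real (Suc k)) (N * Suc k) \<omega>) \<partial>M)"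
proof -
  let ?h = "t / real N / real (Suc k)"
  have h: "?h > 0" using t N by simp
  have n: "N * Suc k > 0" using N by simp
  have \<tau>: "t / real N > 0" using t N by simp
  show ?thesis
    unfolding core_grid[OF BM h n \<sigma> g]
    by (simp only: prod_rho_fine[OF zero_less_Suc refl \<tau> \<sigma>])
qed

lemma rhoC_integrable:
  assumes N: "N > 0"
  shows "integrable M (rhoC B \<sigma> (t / real N) N v)"
    and "(\<integral>\<^sup>+\<omega>. ennreal (rhoC B \<sigma> (t / real N) N v \<omega>) \<partial>M) = 1"
proof -
  have \<tau>: "t / real N > 0" using t N by simp
  have pos: "rhoC B \<sigma> (t / real N) N v \<omega> > 0" for \<omega> by (simp add: rhoC_def)
  have "(\<integral>\<^sup>+\<omega>. ennreal (rhoC B \<sigma> (t / real N) N v \<omega> powr 1) \<partial>M) = 1"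
    using rhoC_moment[OF BM \<sigma> t N \<tau>, of v 1] by simp
  then show one: "(\<integral>\<^sup>+\<omega>. ennreal (rhoC B \<sigma> (t / real N) N v \<omega>) \<partial>M) = 1"
    using pos by (simp add: less_imp_le)
  show "integrable M (rhoC B \<sigma> (t / real N) N v)"
  proof (rule integrableI_nonneg)
    show "AE x in M. 0 \<le> rhoC B \<sigma> (t / real N) N v x" using pos by (intro AE_I2 less_imp_le)
  qed (use rhoC_meas[OF BM \<sigma> t \<tau>] one in auto)
qed

lemma Lmap_dfine_lim:
  fixes v :: "nat \<Rightarrow> real ^ 'n"
  assumes N: "N > 0"
  shows "(\<lambda>k. Lmap (t / real N / real (Suc k)) (N * Suc k) (dfine (t / real N / real (Suc k)) (Suc k) v))
           \<longlonglongrightarrow> cvec (t / real N) N v"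
proof -
  let ?\<tau> = "t / real N"
  define w :: "(real ^ 'n) \<times> (real ^ 'n)" where "w = (0, \<chi> i::'n. ?\<tau>\<^sup>2 / 2 * (\<Sum>j<N. v j $ i))"
  have eq: "Lmap (?\<tau> / real (Suc k)) (N * Suc k) (dfine (?\<tau> / real (Suc k)) (Suc k) v)
      = cvec ?\<tau> N v - (1 / real (Suc k)) *\<^sub>R w" for k
    by (subst Lmap_dfine[OF zero_less_Suc refl]) (simp add: w_def vec_eq_iff)
  have l: "(\<lambda>k. 1 / real (Suc k)) \<longlonglongrightarrow> (0::real)"
    using LIMSEQ_Suc[OF lim_1_over_n] by simp
  have "(\<lambda>k. cvec ?\<tau> N v - (1 / real (Suc k)) *\<^sub>R w) \<longlonglongrightarrow> cvec ?\<tau> N v - (0::real) *\<^sub>R w"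
    by (intro tendsto_intros l)
  then show ?thesis unfolding eq by simp
qed

lemma identity_cont:
  assumes N: "N > 0" and gc: "continuous_on UNIV g"
    and g0: "\<And>x. 0 \<le> g x" and g1: "\<And>x. g x \<le> 1"
  shows "(\<integral>\<omega>. g (Xp B t \<omega> + cvec (t / real N) N v) \<partial>M)
       = (\<integral>\<omega>. rhoC B \<sigma> (t / real N) N v \<omega> * g (Xp B t \<omega>) \<partial>M)"
proof -
  interpret prob_space M by (rule BM_prob_space[OF BM])
  let ?\<rho> = "rhoC B \<sigma> (t / real N) N v"
  let ?X = "\<lambda>k. XK B (t / real N / real (Suc k)) (N * Suc k)"
  let ?L = "\<lambda>k. Lmap (t / real N / real (Suc k)) (N * Suc k) (dfine (t / real N / real (Suc k)) (Suc k) v)"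
  let ?c = "cvec (t / real N) N v"
  have \<tau>: "t / real N > 0" using t N by simp
  have gm[measurable]: "g \<in> borel_measurable borel" by (rule borel_measurable_continuous_onI[OF gc])
  have Xm[measurable]: "?X k \<in> borel_measurable M" for k by (rule XK_meas[OF BM \<sigma> t], rule divide_pos_pos[OF \<tau>]) simp
  have Xpm[measurable]: "Xp B t \<in> borel_measurable M" by (rule Xp_meas[OF BM \<sigma> t])
  have \<rho>m[measurable]: "?\<rho> \<in> borel_measurable M" by (rule rhoC_meas[OF BM \<sigma> t \<tau>])
  have \<rho>i: "integrable M ?\<rho>" by (rule rhoC_integrable(1)[OF N])
  have \<rho>0: "0 \<le> ?\<rho> \<omega>" for \<omega> by (simp add: rhoC_def)
  have ma: "(\<lambda>\<omega>. g (?X k \<omega> + ?L k)) \<in> borel_measurable M" for k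
    by (rule measurable_compose[OF _ gm]) (intro borel_measurable_add Xm borel_measurable_const)
  have mb: "(\<lambda>\<omega>. ?\<rho> \<omega> * g (?X k \<omega>)) \<in> borel_measurable M" for k
    by (intro borel_measurable_times \<rho>m measurable_compose[OF Xm gm])
  have nb: "norm (?\<rho> \<omega> * g y) \<le> norm (?\<rho> \<omega>)" for \<omega> y
  proof -
    have "?\<rho> \<omega> * g y \<le> ?\<rho> \<omega>" by (rule mult_left_le[OF g1 \<rho>0])
    then show ?thesis using g0[of y] \<rho>0[of \<omega>] by simp
  qed
  have ia: "integrable M (\<lambda>\<omega>. g (?X k \<omega> + ?L k))" for k
    by (rule integrable_const_bound[where B=1, OF _ ma]) (use g0 g1 in auto)
  have ib: "integrable M (\<lambda>\<omega>. ?\<rho> \<omega> * g (?X k \<omega>))" for k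
    by (rule Bochner_Integration.integrable_bound[OF \<rho>i mb]) (intro AE_I2 nb)
  have ab: "(\<integral>\<omega>. g (?X k \<omega> + ?L k) \<partial>M) = (\<integral>\<omega>. ?\<rho> \<omega> * g (?X k \<omega>) \<partial>M)" for k
  proof -
    have "ennreal (\<integral>\<omega>. g (?X k \<omega> + ?L k) \<partial>M) = (\<integral>\<^sup>+\<omega>. ennreal (g (?X k \<omega> + ?L k)) \<partial>M)"
      by (rule nn_integral_eq_integral[symmetric, OF ia]) (use g0 in simp)
    also have "\<dots> = (\<integral>\<^sup>+\<omega>. ennreal (?\<rho> \<omega>) * ennreal (g (?X k \<omega>)) \<partial>M)"
      by (rule identity_discrete[OF N]) simp
    also have "\<dots> = (\<integral>\<^sup>+\<omega>. ennreal (?\<rho> \<omega> * g (?X k \<omega>)) \<partial>M)"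
      by (intro nn_integral_cong) (simp add: ennreal_mult' \<rho>0)
    also have "\<dots> = ennreal (\<integral>\<omega>. ?\<rho> \<omega> * g (?X k \<omega>) \<partial>M)"
      by (rule nn_integral_eq_integral[OF ib]) (use g0 \<rho>0 in simp)
    finally show ?thesis
      by (rule ennreal_inj[THEN iffD1, rotated 2])
         (auto intro!: integral_nonneg_AE simp: g0 \<rho>0)
  qed
  have gcont: "isCont g x" for x using gc continuous_on_eq_continuous_at[of UNIV g] by blast
  have limX: "(\<lambda>k. ?X k \<omega>) \<longlonglongrightarrow> Xp B t \<omega>" if "\<omega> \<in> space M" for \<omega>
    by (rule XK_lim[OF BM \<sigma> t N that])
  have La: "(\<lambda>k. \<integral>\<omega>. g (?X k \<omega> + ?L k) \<partial>M) \<longlonglongrightarrow> (\<integral>\<omega>. g (Xp B t \<omega> + ?c) \<partial>M)"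
  proof (rule integral_dominated_convergence[where w="\<lambda>_. 1"])
    show "AE \<omega> in M. (\<lambda>k. g (?X k \<omega> + ?L k)) \<longlonglongrightarrow> g (Xp B t \<omega> + ?c)"
      by (intro AE_I2 isCont_tendsto_compose[OF gcont] tendsto_add limX Lmap_dfine_lim[OF N])
    show "(\<lambda>\<omega>. g (Xp B t \<omega> + ?c)) \<in> borel_measurable M"
      by (rule measurable_compose[OF _ gm]) (intro borel_measurable_add Xpm borel_measurable_const)
    show "(\<lambda>\<omega>. g (?X k \<omega> + ?L k)) \<in> borel_measurable M" for k by (rule ma)
    show "AE \<omega> in M. norm (g (?X k \<omega> + ?L k)) \<le> 1" for k
    proof (intro AE_I2)
      fix \<omega> show "norm (g (?X k \<omega> + ?L k)) \<le> 1" using g0 g1 by (simp add: abs_of_nonneg)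
    qed
  qed simp
  have Lb: "(\<lambda>k. \<integral>\<omega>. ?\<rho> \<omega> * g (?X k \<omega>) \<partial>M) \<longlonglongrightarrow> (\<integral>\<omega>. ?\<rho> \<omega> * g (Xp B t \<omega>) \<partial>M)"
  proof (rule integral_dominated_convergence[where w="?\<rho>"])
    show "AE \<omega> in M. (\<lambda>k. ?\<rho> \<omega> * g (?X k \<omega>)) \<longlonglongrightarrow> ?\<rho> \<omega> * g (Xp B t \<omega>)"
      by (intro AE_I2 tendsto_mult tendsto_const isCont_tendsto_compose[OF gcont] limX)
    show "AE \<omega> in M. norm (?\<rho> \<omega> * g (?X k \<omega>)) \<le> ?\<rho> \<omega>" for k
    proof (intro AE_I2)
      fix \<omega> have "norm (?\<rho> \<omega> * g (?X k \<omega>)) \<le> norm (?\<rho> \<omega>)" by (rule nb)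
      then show "norm (?\<rho> \<omega> * g (?X k \<omega>)) \<le> ?\<rho> \<omega>" using \<rho>0[of \<omega>] by simp
    qed
    show "(\<lambda>\<omega>. ?\<rho> \<omega> * g (Xp B t \<omega>)) \<in> borel_measurable M"
      by (intro borel_measurable_times \<rho>m measurable_compose[OF Xpm gm])
    show "(\<lambda>\<omega>. ?\<rho> \<omega> * g (?X k \<omega>)) \<in> borel_measurable M" for k by (rule mb)
  qed (rule \<rho>i)
  show ?thesis
    using LIMSEQ_unique[OF La[unfolded ab] Lb] .
qed

end


context
  fixes M :: "'a measure" and \<sigma> t :: real and B :: "real \<Rightarrow> 'a \<Rightarrow> real ^ 'n::finite"
  assumes BM: "brownian_motion M \<sigma> B" and \<sigma>: "\<sigma> > 0" and t: "t > 0"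
begin

lemma identity_borel:
  assumes N: "N > 0" and f[measurable]: "f \<in> borel_measurable borel"
  shows "(\<integral>\<^sup>+\<omega>. f (Xp B t \<omega> + cvec (t / real N) N v) \<partial>M)
       = (\<integral>\<^sup>+\<omega>. ennreal (rhoC B \<sigma> (t / real N) N v \<omega>) * f (Xp B t \<omega>) \<partial>M)"
proof -
  interpret prob_space M by (rule BM_prob_space[OF BM])
  let ?\<rho> = "rhoC B \<sigma> (t / real N) N v"
  let ?c = "cvec (t / real N) N v"
  have \<tau>: "t / real N > 0" using t N by simp
  have Xpm[measurable]: "Xp B t \<in> borel_measurable M" by (rule Xp_meas[OF BM \<sigma> t])
  have \<rho>m[measurable]: "?\<rho> \<in> borel_measurable M" by (rule rhoC_meas[OF BM \<sigma> t \<tau>])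
  have \<rho>0: "0 \<le> ?\<rho> \<omega>" for \<omega> by (simp add: rhoC_def)
  have one: "(\<integral>\<^sup>+\<omega>. ennreal (?\<rho> \<omega>) \<partial>M) = 1" by (rule rhoC_integrable(2)[OF BM \<sigma> t N])
  have m1: "(\<lambda>\<omega>. Xp B t \<omega> + ?c) \<in> measurable M borel" by measurable
  have m2: "Xp B t \<in> measurable (density M (\<lambda>\<omega>. ennreal (?\<rho> \<omega>))) borel" by simp
  define \<mu>1 where "\<mu>1 = distr M borel (\<lambda>\<omega>. Xp B t \<omega> + ?c)"
  define \<mu>2 where "\<mu>2 = distr (density M (\<lambda>\<omega>. ennreal (?\<rho> \<omega>))) borel (Xp B t)"
  have fd: "finite_measure (density M (\<lambda>\<omega>. ennreal (?\<rho> \<omega>)))"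
    by (rule finite_measureI) (simp add: emeasure_density one)
  have "\<mu>1 = \<mu>2"
  proof (rule measure_eq_bounded_continuous)
    show "sets \<mu>1 = sets borel" "sets \<mu>2 = sets borel" by (simp_all add: \<mu>1_def \<mu>2_def)
    show "finite_measure \<mu>1" unfolding \<mu>1_def by (rule finite_measure_distr[OF m1])
    show "finite_measure \<mu>2" unfolding \<mu>2_def by (rule finite_measure.finite_measure_distr[OF fd m2])
    fix g :: "(real ^ 'n) \<times> (real ^ 'n) \<Rightarrow> real" assume gc: "continuous_on UNIV g" and g0: "\<And>x. 0 \<le> g x" and g1: "\<And>x. g x \<le> 1"
    have gm[measurable]: "g \<in> borel_measurable borel" by (rule borel_measurable_continuous_onI[OF gc])
    have "(\<integral>x. g x \<partial>\<mu>1) = (\<integral>\<omega>. g (Xp B t \<omega> + ?c) \<partial>M)"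
      unfolding \<mu>1_def by (rule integral_distr[OF m1 gm])
    also have "\<dots> = (\<integral>\<omega>. ?\<rho> \<omega> * g (Xp B t \<omega>) \<partial>M)"
      by (rule identity_cont[OF BM \<sigma> t N gc g0 g1])
    also have "\<dots> = (\<integral>\<omega>. g (Xp B t \<omega>) \<partial>density M (\<lambda>\<omega>. ennreal (?\<rho> \<omega>)))"
      by (subst integral_density) (simp_all add: \<rho>0)
    also have "\<dots> = (\<integral>x. g x \<partial>\<mu>2)"
      unfolding \<mu>2_def by (rule integral_distr[OF m2 gm, symmetric])
    finally show "(\<integral>x. g x \<partial>\<mu>1) = (\<integral>x. g x \<partial>\<mu>2)" .
  qed
  have "(\<integral>\<^sup>+\<omega>. f (Xp B t \<omega> + ?c) \<partial>M) = (\<integral>\<^sup>+x. f x \<partial>\<mu>1)"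
    unfolding \<mu>1_def by (rule nn_integral_distr[OF m1, symmetric]) simp
  also have "\<dots> = (\<integral>\<^sup>+x. f x \<partial>\<mu>2)" by (simp add: \<open>\<mu>1 = \<mu>2\<close>)
  also have "\<dots> = (\<integral>\<^sup>+\<omega>. f (Xp B t \<omega>) \<partial>density M (\<lambda>\<omega>. ennreal (?\<rho> \<omega>)))"
    unfolding \<mu>2_def by (rule nn_integral_distr[OF m2]) simp
  also have "\<dots> = (\<integral>\<^sup>+\<omega>. ennreal (?\<rho> \<omega>) * f (Xp B t \<omega>) \<partial>M)"
    by (rule nn_integral_density) simp_all
  finally show ?thesis .
qed

end


lemma sum_sq_nat_real: "(\<Sum>j<N. (real j)\<^sup>2) = real N * (real N - 1) * (2 * real N - 1) / 6"
  by (induction N) (simp_all add: field_simps power2_eq_square)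

lemma S1: "(\<Sum>j<N. real N - real j - 1/2) = (real N)\<^sup>2 / 2"
proof -
  have "(\<Sum>j<N. real N - real j - 1/2) = (\<Sum>j<N. (real N - 1/2) - real j)"
    by (intro sum.cong refl) simp
  also have "\<dots> = (\<Sum>j<N. (real N - 1/2)) - (\<Sum>j<N. real j)"
    by (rule sum_subtractf)
  also have "\<dots> = real N * (real N - 1/2) - real N * (real N - 1) / 2"
    by (simp add: sum_nat_real)
  finally show ?thesis by (simp add: field_simps power2_eq_square)
qed

lemma S2: "(\<Sum>j<N. (real N - real j - 1/2)\<^sup>2) = (real N)^3 / 3 - real N / 12"
proof -
  have "(\<Sum>j<N. (real N - real j - 1/2)\<^sup>2)
      = (\<Sum>j<N. ((real N - 1/2)\<^sup>2 - (2 * (real N - 1/2)) * real j) + (real j)\<^sup>2)"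
    by (intro sum.cong refl) (simp add: power2_eq_square algebra_simps)
  also have "\<dots> = ((\<Sum>j<N. (real N - 1/2)\<^sup>2) - (\<Sum>j<N. (2 * (real N - 1/2)) * real j)) + (\<Sum>j<N. (real j)\<^sup>2)"
    by (simp only: sum.distrib sum_subtractf)
  also have "\<dots> = (real N * (real N - 1/2)\<^sup>2 - (2 * (real N - 1/2)) * (real N * (real N - 1) / 2))
       + real N * (real N - 1) * (2 * real N - 1) / 6"
    by (simp only: sum_constant card_lessThan sum_distrib_left[symmetric] sum_nat_real sum_sq_nat_real)
  finally show ?thesis
    by (simp add: field_simps power2_eq_square power3_eq_cube)
qed

lemma choose_scalar:
  fixes a b t :: real and N :: nat
  assumes N: "N \<ge> 2" and t: "t > 0"
  defines "\<epsilon> \<equiv> 1 / (real N)\<^sup>2"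
  defines "\<kappa> \<equiv> 12 * (b - t * a / 2) / (t\<^sup>2 * (1 - \<epsilon>))"
  defines "lam \<equiv> a / t - \<kappa> / 2"
  defines "w \<equiv> \<lambda>j. lam + \<kappa> * (real N - real j - 1/2) / real N"
  shows "t / real N * (\<Sum>j<N. w j) = a"
    and "(t / real N)\<^sup>2 * (\<Sum>j<N. (real N - real j - 1/2) * w j) = b"
    and "t / real N * (\<Sum>j<N. (w j)\<^sup>2) = a\<^sup>2 / t + 12 * (b - t * a / 2)\<^sup>2 / (t ^ 3 * (1 - \<epsilon>))"
proof -
  have Nr: "real N \<ge> 2" using N by simp
  have Npos: "real N > 0" using Nr by simp
  have e1: "1 - \<epsilon> > 0"
  proof -
    have "(2::real)^2 \<le> (real N)^2" by (rule power_mono[OF Nr]) simp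
    then have "(real N)\<^sup>2 \<ge> 4" by simp
    then have "1 / (real N)\<^sup>2 < 1" by (simp add: divide_less_eq_1) presburger
    then show ?thesis by (simp add: \<epsilon>_def)
  qed
  define c where "c j = real N - real j - 1/2" for j
  have wc: "w j = lam + \<kappa> / real N * c j" for j by (simp add: w_def c_def)
  have s0: "(\<Sum>j<N. w j) = real N * lam + \<kappa> / real N * (real N)\<^sup>2 / 2"
  proof -
    have "(\<Sum>j<N. w j) = (\<Sum>j<N. lam + \<kappa> / real N * c j)"
      by (intro sum.cong refl) (simp only: wc)
    also have "\<dots> = real N * lam + \<kappa> / real N * (\<Sum>j<N. c j)"
      by (simp add: sum.distrib sum_distrib_left)
    finally show ?thesis using S1[of N] by (simp add: c_def)
  qed
  have s1: "(\<Sum>j<N. c j * w j) = lam * ((real N)\<^sup>2 / 2) + \<kappa> / real N * ((real N)^3 / 3 - real N / 12)"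
  proof -
    have "(\<Sum>j<N. c j * w j) = (\<Sum>j<N. lam * c j + \<kappa> / real N * (c j)\<^sup>2)"
      by (intro sum.cong refl) (simp only: wc, simp add: power2_eq_square algebra_simps)
    also have "\<dots> = lam * (\<Sum>j<N. c j) + \<kappa> / real N * (\<Sum>j<N. (c j)\<^sup>2)"
      by (simp add: sum.distrib sum_distrib_left)
    finally show ?thesis using S1[of N] S2[of N] by (simp add: c_def)
  qed
  have s2: "(\<Sum>j<N. (w j)\<^sup>2) = real N * lam\<^sup>2 + 2 * lam * \<kappa> / real N * ((real N)\<^sup>2 / 2) + (\<kappa> / real N)\<^sup>2 * ((real N)^3 / 3 - real N / 12)"
  proof -
    have "(\<Sum>j<N. (w j)\<^sup>2) = (\<Sum>j<N. lam\<^sup>2 + 2 * lam * \<kappa> / real N * c j + (\<kappa> / real N)\<^sup>2 * (c j)\<^sup>2)"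
      by (intro sum.cong refl) (simp only: wc, simp add: power2_eq_square algebra_simps)
    also have "\<dots> = real N * lam\<^sup>2 + 2 * lam * \<kappa> / real N * (\<Sum>j<N. c j) + (\<kappa> / real N)\<^sup>2 * (\<Sum>j<N. (c j)\<^sup>2)"
      by (simp add: sum.distrib sum_distrib_left)
    finally show ?thesis using S1[of N] S2[of N] by (simp add: c_def)
  qed
  have eps: "\<epsilon> * (real N)\<^sup>2 = 1" using Npos by (simp add: \<epsilon>_def)
  have tl: "lam + \<kappa> / 2 = a / t" by (simp add: lam_def)
  have kk: "t\<^sup>2 * \<kappa> * (1 - \<epsilon>) = 12 * (b - t * a / 2)"
    using t e1 unfolding \<kappa>_def by (simp add: field_simps)
  show "t / real N * (\<Sum>j<N. w j) = a"
  proof -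
    have "t / real N * (\<Sum>j<N. w j) = t * (lam + \<kappa> / 2)"
      unfolding s0 using Npos by (simp add: field_simps power2_eq_square)
    then show ?thesis unfolding tl using t by simp
  qed
  show "(t / real N)\<^sup>2 * (\<Sum>j<N. (real N - real j - 1/2) * w j) = b"
  proof -
    have "(t / real N)\<^sup>2 * (\<Sum>j<N. c j * w j) = t\<^sup>2 * (lam / 2 + \<kappa> * (1/3 - \<epsilon> / 12))"
      unfolding s1 using Npos eps by (simp add: field_simps power2_eq_square power3_eq_cube)
    also have "\<dots> = t\<^sup>2 * ((lam + \<kappa> / 2) / 2) + (t\<^sup>2 * \<kappa> * (1 - \<epsilon>)) / 12"
      by (simp add: field_simps)
    also have "\<dots> = b" unfolding tl kk using t by (simp add: power2_eq_square field_simps)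
    finally show ?thesis by (simp add: c_def)
  qed
  show "t / real N * (\<Sum>j<N. (w j)\<^sup>2) = a\<^sup>2 / t + 12 * (b - t * a / 2)\<^sup>2 / (t ^ 3 * (1 - \<epsilon>))"
  proof -
    have "t / real N * (\<Sum>j<N. (w j)\<^sup>2) = t * (lam\<^sup>2 + lam * \<kappa> + \<kappa>\<^sup>2 * (1/3 - \<epsilon> / 12))"
      unfolding s2 using Npos eps by (simp add: field_simps power2_eq_square power3_eq_cube)
    also have "\<dots> = t * (lam + \<kappa> / 2)\<^sup>2 + t * \<kappa>\<^sup>2 * (1 - \<epsilon>) / 12"
      by (simp add: field_simps power2_eq_square)
    also have "t * \<kappa>\<^sup>2 * (1 - \<epsilon>) / 12 = (t\<^sup>2 * \<kappa> * (1 - \<epsilon>))\<^sup>2 / (12 * t ^ 3 * (1 - \<epsilon>))"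
      using t e1 by (simp add: field_simps power2_eq_square power3_eq_cube)
    also have "\<dots> = 12 * (b - t * a / 2)\<^sup>2 / (t ^ 3 * (1 - \<epsilon>))"
      unfolding kk using t e1 by (simp add: field_simps power2_eq_square)
    also have "t * (lam + \<kappa> / 2)\<^sup>2 = a\<^sup>2 / t" unfolding tl using t by (simp add: power2_eq_square)
    finally show ?thesis .
  qed
qed



lemma bound_N:
  fixes M :: "'a measure" and B :: "real \<Rightarrow> 'a \<Rightarrow> real ^ 'n::finite"
    and \<sigma> t \<alpha> :: real and f :: "(real ^ 'n) \<times> (real ^ 'n) \<Rightarrow> real"
    and p \<xi> p' \<xi>' :: "real ^ 'n"
  assumes \<sigma>: "\<sigma> > 0" and BM: "brownian_motion M \<sigma> B"
    and fm[measurable]: "f \<in> borel_measurable borel" and f0: "\<And>x. f x \<ge> 0"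
    and fb: "bounded (range f)" and t: "t > 0" and \<alpha>: "\<alpha> > 1" and N: "N \<ge> 2"
  defines "a \<equiv> p - p'" and "b \<equiv> (\<xi> + t *\<^sub>R p) - (\<xi>' + t *\<^sub>R p')"
  shows "(kolmogorov_semigroup M B t f (p, \<xi>)) powr \<alpha>
    \<le> exp (\<alpha> / (\<alpha> - 1) * ((\<Sum>i\<in>UNIV. (a $ i)\<^sup>2 / t + 12 * (b $ i - t * a $ i / 2)\<^sup>2 / (t ^ 3 * (1 - 1 / (real N)\<^sup>2))) / (2 * \<sigma>\<^sup>2)))
      * kolmogorov_semigroup M B t (\<lambda>x. (f x) powr \<alpha>) (p', \<xi>')"
proof -
  interpret prob_space M by (rule BM_prob_space[OF BM])
  define \<tau> where "\<tau> = t / real N"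
  have N0: "N > 0" using N by simp
  have \<tau>: "\<tau> > 0" using t N0 by (simp add: \<tau>_def)
  define \<epsilon> where "\<epsilon> = 1 / (real N)\<^sup>2"
  define \<kappa> where "\<kappa> i = 12 * (b $ i - t * a $ i / 2) / (t\<^sup>2 * (1 - \<epsilon>))" for i
  define lam where "lam i = a $ i / t - \<kappa> i / 2" for i
  define v :: "nat \<Rightarrow> real ^ 'n" where "v j = (\<chi> i. lam i + \<kappa> i * (real N - real j - 1/2) / real N)" for j
  have vi: "v j $ i = lam i + \<kappa> i * (real N - real j - 1/2) / real N" for j i by (simp add: v_def)
  have cs1: "t / real N * (\<Sum>j<N. v j $ i) = a $ i" for i
    using choose_scalar(1)[OF N t, where a="a $ i" and b="b $ i"]
    unfolding vi lam_def \<kappa>_def \<epsilon>_def .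
  have cs2: "(t / real N)\<^sup>2 * (\<Sum>j<N. (real N - real j - 1/2) * v j $ i) = b $ i" for i
    using choose_scalar(2)[OF N t, where a="a $ i" and b="b $ i"]
    unfolding vi lam_def \<kappa>_def \<epsilon>_def .
  have cs3: "t / real N * (\<Sum>j<N. (v j $ i)\<^sup>2) = (a $ i)\<^sup>2 / t + 12 * (b $ i - t * a $ i / 2)\<^sup>2 / (t ^ 3 * (1 - \<epsilon>))" for i
    using choose_scalar(3)[OF N t, where a="a $ i" and b="b $ i"]
    unfolding vi lam_def \<kappa>_def \<epsilon>_def .
  have cv: "cvec \<tau> N v = (a, b)"
    using cs1 cs2 by (simp add: cvec_def vec_eq_iff \<tau>_def)
  define W where "W = (\<Sum>i\<in>UNIV. (a $ i)\<^sup>2 / t + 12 * (b $ i - t * a $ i / 2)\<^sup>2 / (t ^ 3 * (1 - \<epsilon>))) / (2 * \<sigma>\<^sup>2)"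
  have energy: "(\<Sum>x\<in>{..<N} \<times> (UNIV::'n set). (dfine \<tau> 1 v x)\<^sup>2) / (2 * (\<sigma> * sqrt \<tau>)\<^sup>2) = W"
  proof -
    have "(\<Sum>x\<in>{..<N} \<times> (UNIV::'n set). (dfine \<tau> 1 v x)\<^sup>2) = (\<Sum>j<N. \<Sum>i\<in>UNIV. (\<tau> * v j $ i)\<^sup>2)"
      by (simp add: dfine_def sum.cartesian_product case_prod_beta)
    also have "\<dots> = \<tau> * (\<Sum>i\<in>UNIV. \<tau> * (\<Sum>j<N. (v j $ i)\<^sup>2))"
      by (subst sum.swap) (simp add: sum_distrib_left power_mult_distrib power2_eq_square mult_ac)
    also have "\<dots> = \<tau> * (\<Sum>i\<in>UNIV. (a $ i)\<^sup>2 / t + 12 * (b $ i - t * a $ i / 2)\<^sup>2 / (t ^ 3 * (1 - \<epsilon>)))"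
      using cs3 by (simp add: \<tau>_def)
    finally show ?thesis using \<tau> \<sigma> by (simp add: W_def power_mult_distrib)
  qed
  define m' where "m' = (p', \<xi>' + t *\<^sub>R p')"
  define u where "u \<omega> = f (m' + Xp B t \<omega>)" for \<omega>
  define \<rho> where "\<rho> = rhoC B \<sigma> \<tau> N v"
  define q where "q = \<alpha> / (\<alpha> - 1)"
  have q1: "q > 1" using \<alpha> by (simp add: q_def field_simps)
  have qm1: "q - 1 = 1 / (\<alpha> - 1)" using \<alpha> by (simp add: q_def field_simps)
  obtain K where K: "\<And>x. f x \<le> K" using fb unfolding bounded_iff by (metis abs_le_D1 rangeI real_norm_def)
  have K0: "K \<ge> 0" using K[of undefined] f0[of undefined] by linarith
  have Xpm[measurable]: "Xp B t \<in> borel_measurable M" by (rule Xp_meas[OF BM \<sigma> t])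
  have \<rho>m[measurable]: "\<rho> \<in> borel_measurable M" unfolding \<rho>_def by (rule rhoC_meas[OF BM \<sigma> t \<tau>])
  have \<rho>0: "0 \<le> \<rho> \<omega>" for \<omega> by (simp add: \<rho>_def rhoC_def)
  have \<rho>i: "integrable M \<rho>" unfolding \<rho>_def \<tau>_def by (rule rhoC_integrable(1)[OF BM \<sigma> t N0])
  have um[measurable]: "u \<in> borel_measurable M" unfolding u_def by measurable
  have u0: "0 \<le> u \<omega>" for \<omega> by (simp add: u_def f0)
  have uK: "u \<omega> \<le> K" for \<omega> by (simp add: u_def K)
  have Lrep: "kolmogorov_semigroup M B t f (p, \<xi>) = (\<integral>\<omega>. f (m' + (Xp B t \<omega> + cvec \<tau> N v)) \<partial>M)"
    unfolding kolmogorov_semigroup_def cv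
    by (simp add: Xp_def m'_def a_def b_def algebra_simps)
  have Rrep: "kolmogorov_semigroup M B t (\<lambda>x. (f x) powr \<alpha>) (p', \<xi>') = (\<integral>\<omega>. u \<omega> powr \<alpha> \<partial>M)"
    unfolding kolmogorov_semigroup_def
    by (simp add: u_def Xp_def m'_def algebra_simps)
  have ident: "(\<integral>\<^sup>+\<omega>. ennreal (f (m' + (Xp B t \<omega> + cvec \<tau> N v))) \<partial>M)
      = (\<integral>\<^sup>+\<omega>. ennreal (\<rho> \<omega>) * ennreal (u \<omega>) \<partial>M)"
    unfolding \<tau>_def \<rho>_def u_def
    by (rule identity_borel[OF BM \<sigma> t N0, where f="\<lambda>y. ennreal (f (m' + y))"]) simp
  have i1: "integrable M (\<lambda>\<omega>. f (m' + (Xp B t \<omega> + cvec \<tau> N v)))"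
    by (rule integrable_const_bound[where B=K]) (use f0 K in auto)
  have i2: "integrable M (\<lambda>\<omega>. u \<omega> * \<rho> \<omega>)"
  proof (rule Bochner_Integration.integrable_bound[where f="\<lambda>\<omega>. K * \<rho> \<omega>"])
    show "integrable M (\<lambda>\<omega>. K * \<rho> \<omega>)" using \<rho>i by simp
    show "(\<lambda>\<omega>. u \<omega> * \<rho> \<omega>) \<in> borel_measurable M" by measurable
    show "AE \<omega> in M. norm (u \<omega> * \<rho> \<omega>) \<le> norm (K * \<rho> \<omega>)"
    proof (intro AE_I2)
      fix \<omega> have "u \<omega> * \<rho> \<omega> \<le> K * \<rho> \<omega>" by (rule mult_right_mono[OF uK \<rho>0])
      then show "norm (u \<omega> * \<rho> \<omega>) \<le> norm (K * \<rho> \<omega>)" using u0[of \<omega>] \<rho>0[of \<omega>] K0 by simp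
    qed
  qed
  have Leq: "kolmogorov_semigroup M B t f (p, \<xi>) = (\<integral>\<omega>. u \<omega> * \<rho> \<omega> \<partial>M)"
  proof -
    have "ennreal (\<integral>\<omega>. f (m' + (Xp B t \<omega> + cvec \<tau> N v)) \<partial>M) = ennreal (\<integral>\<omega>. u \<omega> * \<rho> \<omega> \<partial>M)"
    proof -
      have "ennreal (\<integral>\<omega>. f (m' + (Xp B t \<omega> + cvec \<tau> N v)) \<partial>M) = (\<integral>\<^sup>+\<omega>. ennreal (f (m' + (Xp B t \<omega> + cvec \<tau> N v))) \<partial>M)"
        by (rule nn_integral_eq_integral[symmetric, OF i1]) (simp add: f0)
      also have "\<dots> = (\<integral>\<^sup>+\<omega>. ennreal (u \<omega> * \<rho> \<omega>) \<partial>M)"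
        unfolding ident by (intro nn_integral_cong) (simp add: ennreal_mult' u0 \<rho>0 mult.commute)
      also have "\<dots> = ennreal (\<integral>\<omega>. u \<omega> * \<rho> \<omega> \<partial>M)"
        by (rule nn_integral_eq_integral[OF i2]) (simp add: u0 \<rho>0)
      finally show ?thesis .
    qed
    moreover have "0 \<le> (\<integral>\<omega>. f (m' + (Xp B t \<omega> + cvec \<tau> N v)) \<partial>M)" by (rule integral_nonneg_AE) (simp add: f0)
    moreover have "0 \<le> (\<integral>\<omega>. u \<omega> * \<rho> \<omega> \<partial>M)" by (rule integral_nonneg_AE) (simp add: u0 \<rho>0)
    ultimately show ?thesis unfolding Lrep by simp
  qed
  have iu: "integrable M (\<lambda>\<omega>. u \<omega> powr \<alpha>)"
  proof (rule integrable_const_bound[where B="K powr \<alpha>"])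
    show "AE \<omega> in M. norm (u \<omega> powr \<alpha>) \<le> K powr \<alpha>"
    proof (intro AE_I2)
      fix \<omega> have "u \<omega> powr \<alpha> \<le> K powr \<alpha>" using u0 uK \<alpha> by (intro powr_mono2) auto
      then show "norm (u \<omega> powr \<alpha>) \<le> K powr \<alpha>" by simp
    qed
    show "(\<lambda>\<omega>. u \<omega> powr \<alpha>) \<in> borel_measurable M" by (intro powr_real_measurable um measurable_const) simp
  qed
  have ex: "q * (q - 1) * (\<Sum>x\<in>{..<N} \<times> (UNIV::'n set). (dfine \<tau> 1 v x)\<^sup>2) / (2 * (\<sigma> * sqrt \<tau>)\<^sup>2) = q * (q - 1) * W"
    by (simp only: energy[symmetric] times_divide_eq_right)
  have mom: "(\<integral>\<^sup>+\<omega>. ennreal (\<rho> \<omega> powr q) \<partial>M) = ennreal (exp (q * (q - 1) * W))"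
    using rhoC_moment[OF BM \<sigma> t N0 \<tau>, of v q] unfolding \<rho>_def ex .
  have iv: "integrable M (\<lambda>\<omega>. \<rho> \<omega> powr q)"
  proof (rule integrableI_nonneg)
    show "(\<lambda>\<omega>. \<rho> \<omega> powr q) \<in> borel_measurable M" by (intro powr_real_measurable \<rho>m measurable_const) simp
    show "AE x in M. 0 \<le> \<rho> x powr q" by (intro AE_I2) simp
    show "(\<integral>\<^sup>+x. ennreal (\<rho> x powr q) \<partial>M) < \<infinity>" unfolding mom by simp
  qed
  have Ceq: "(\<integral>\<omega>. \<rho> \<omega> powr q \<partial>M) = exp (q * (q - 1) * W)"
    using nn_integral_eq_integral[OF iv] mom by simp
  have H: "(\<integral>\<omega>. u \<omega> * \<rho> \<omega> \<partial>M) \<le> (\<integral>\<omega>. u \<omega> powr \<alpha> \<partial>M) powr (1/\<alpha>) * (\<integral>\<omega>. \<rho> \<omega> powr q \<partial>M) powr (1/q)"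
    by (rule holder_ineq[OF \<alpha> q_def um \<rho>m u0 \<rho>0 iu iv i2])
  define R where "R = (\<integral>\<omega>. u \<omega> powr \<alpha> \<partial>M)"
  have R0: "R \<ge> 0" unfolding R_def by (rule integral_nonneg_AE) simp
  have L0: "0 \<le> (\<integral>\<omega>. u \<omega> * \<rho> \<omega> \<partial>M)" by (rule integral_nonneg_AE) (simp add: u0 \<rho>0)
  have "(\<integral>\<omega>. u \<omega> * \<rho> \<omega> \<partial>M) powr \<alpha> \<le> (R powr (1/\<alpha>) * exp (q * (q - 1) * W) powr (1/q)) powr \<alpha>"
    using H L0 \<alpha> unfolding Ceq R_def by (intro powr_mono2) auto
  also have "\<dots> = R * exp (\<alpha> / (\<alpha> - 1) * W)"
  proof -
    have "(R powr (1/\<alpha>) * exp (q * (q - 1) * W) powr (1/q)) powr \<alpha> = R powr (1/\<alpha> * \<alpha>) * exp (q * (q - 1) * W * (1/q) * \<alpha>)"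
      by (simp add: powr_mult powr_powr exp_powr_real)
    also have "R powr (1/\<alpha> * \<alpha>) = R" using \<alpha> R0 by (simp add: powr_one)
    also have "q * (q - 1) * W * (1/q) * \<alpha> = \<alpha> / (\<alpha> - 1) * W"
    proof -
      have "q * (q - 1) * W * (1/q) * \<alpha> = (q - 1) * \<alpha> * W" using q1 by simp
      also have "\<dots> = \<alpha> / (\<alpha> - 1) * W" by (simp add: qm1)
      finally show ?thesis .
    qed
    finally show ?thesis .
  qed
  finally show ?thesis
    unfolding Leq Rrep R_def[symmetric] W_def \<epsilon>_def by (simp add: mult.commute)
qed


theorem theorem2p9:
  fixes M :: "'a measure" and B :: "real \<Rightarrow> 'a \<Rightarrow> real ^ 'n"
    and \<sigma> t \<alpha> :: real and f :: "(real ^ 'n) \<times> (real ^ 'n) \<Rightarrow> real"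
    and p \<xi> p' \<xi>' :: "real ^ 'n"
  assumes "\<sigma> > 0"
    and "brownian_motion M \<sigma> B"
    and "f \<in> borel_measurable borel"
    and "\<And>x. f x \<ge> 0"
    and "bounded (range f)"
    and "t > 0"
    and "\<alpha> > 1"
  shows "(kolmogorov_semigroup M B t f (p, \<xi>)) powr \<alpha>
    \<le> exp (\<alpha> / (\<alpha> - 1) *
          (6 / (\<sigma>\<^sup>2 * t ^ 3) * (\<Sum>i\<in>UNIV. (t / 2 * (p' $ i - p $ i) + (\<xi>' $ i - \<xi> $ i))\<^sup>2)
           + 1 / (2 * \<sigma>\<^sup>2 * t) * (\<Sum>i\<in>UNIV. (p' $ i - p $ i)\<^sup>2)))
      * kolmogorov_semigroup M B t (\<lambda>x. (f x) powr \<alpha>) (p', \<xi>')"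
proof -
  note A = assms
  define a where "a = p - p'"
  define b where "b = (\<xi> + t *\<^sub>R p) - (\<xi>' + t *\<^sub>R p')"
  define L where "L = (kolmogorov_semigroup M B t f (p, \<xi>)) powr \<alpha>"
  define R where "R = kolmogorov_semigroup M B t (\<lambda>x. (f x) powr \<alpha>) (p', \<xi>')"
  define W where "W e = (\<Sum>i\<in>UNIV. (a $ i)\<^sup>2 / t + 12 * (b $ i - t * a $ i / 2)\<^sup>2 / (t ^ 3 * (1 - e))) / (2 * \<sigma>\<^sup>2)" for e
  have bnd: "L \<le> exp (\<alpha> / (\<alpha> - 1) * W (1 / (real (Suc (Suc k)))\<^sup>2)) * R" for k
    unfolding L_def R_def W_def a_def b_def
    by (rule bound_N[OF A(1,2,3,4,5,6,7)]) simp
  have e0: "(\<lambda>k. 1 / (real (Suc (Suc k)))\<^sup>2) \<longlonglongrightarrow> (0::real)"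
  proof -
    have "(\<lambda>k. 1 / real (Suc (Suc k))) \<longlonglongrightarrow> (0::real)"
      using LIMSEQ_Suc[OF LIMSEQ_Suc[OF lim_1_over_n]] by simp
    then have "(\<lambda>k. (1 / real (Suc (Suc k)))\<^sup>2) \<longlonglongrightarrow> (0::real)"
      using tendsto_power[of _ 0 sequentially 2] by fastforce
    then show ?thesis by (simp add: power_one_over)
  qed
  have lim: "(\<lambda>k. exp (\<alpha> / (\<alpha> - 1) * W (1 / (real (Suc (Suc k)))\<^sup>2)) * R) \<longlonglongrightarrow> exp (\<alpha> / (\<alpha> - 1) * W 0) * R"
    unfolding W_def using A(1,6) by (intro tendsto_intros e0) auto
  have "L \<le> exp (\<alpha> / (\<alpha> - 1) * W 0) * R"
    by (rule LIMSEQ_le_const[OF lim]) (use bnd in blast)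
  also have "W 0 = 6 / (\<sigma>\<^sup>2 * t ^ 3) * (\<Sum>i\<in>UNIV. (t / 2 * (p' $ i - p $ i) + (\<xi>' $ i - \<xi> $ i))\<^sup>2)
           + 1 / (2 * \<sigma>\<^sup>2 * t) * (\<Sum>i\<in>UNIV. (p' $ i - p $ i)\<^sup>2)"
  proof -
    have ai: "(a $ i)\<^sup>2 = (p' $ i - p $ i)\<^sup>2" for i by (simp add: a_def power2_commute)
    have bi: "(b $ i - t * a $ i / 2)\<^sup>2 = (t / 2 * (p' $ i - p $ i) + (\<xi>' $ i - \<xi> $ i))\<^sup>2" for i
    proof -
      have "b $ i - t * a $ i / 2 = - (t / 2 * (p' $ i - p $ i) + (\<xi>' $ i - \<xi> $ i))"
        by (simp add: a_def b_def field_simps)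
      then show ?thesis by (metis power2_minus)
    qed
    have "W 0 = (\<Sum>i\<in>UNIV. (p' $ i - p $ i)\<^sup>2 / t + 12 * (t / 2 * (p' $ i - p $ i) + (\<xi>' $ i - \<xi> $ i))\<^sup>2 / t ^ 3) / (2 * \<sigma>\<^sup>2)"
      by (simp add: W_def ai bi)
    also have "\<dots> = ((\<Sum>i\<in>UNIV. (p' $ i - p $ i)\<^sup>2) / t + 12 * (\<Sum>i\<in>UNIV. (t / 2 * (p' $ i - p $ i) + (\<xi>' $ i - \<xi> $ i))\<^sup>2) / t ^ 3) / (2 * \<sigma>\<^sup>2)"
      by (simp add: sum.distrib sum_divide_distrib sum_distrib_left)
    also have "\<dots> = 6 / (\<sigma>\<^sup>2 * t ^ 3) * (\<Sum>i\<in>UNIV. (t / 2 * (p' $ i - p $ i) + (\<xi>' $ i - \<xi> $ i))\<^sup>2)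
           + 1 / (2 * \<sigma>\<^sup>2 * t) * (\<Sum>i\<in>UNIV. (p' $ i - p $ i)\<^sup>2)"
      using A(1,6) by (simp add: field_simps)
    finally show ?thesis .
  qed
  finally show ?thesis unfolding L_def R_def .
qed


end
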